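(* Let $\alpha,\beta,\omega,\rho\in\mathbb{C}$ with $\mathrm{Re}(\alpha)>0$ and $\mathrm{Re}(\beta)>0$. Then for any $L^1$ function $f$ and any $\mu,\nu\in\mathbb{C}$ with $\mathrm{Re}(\nu\beta)>0$, $$\left(\mathcal{E}_{\alpha,\beta;c+}^{\omega,\rho}\right)^{\mu}\left(\mathcal{E}_{\alpha,\beta;c+}^{\omega,\rho}\right)^{\nu}f(x)=\left(\mathcal{E}_{\alpha,\beta;c+}^{\omega,\rho}\right)^{\mu+\nu}f(x).$$
   Context: The Prabhakar fractional integral is $\mathcal{E}_{\alpha,\beta;c+}^{\omega,\rho}f(x)=\int_c^x (x-t)^{\beta-1}E_{\alpha,\beta}^{\rho}[\omega(x-t)^{\alpha}]f(t)\,\mathrm{d}t$ for $\mathrm{Re}(\alpha),\mathrm{Re}(\beta)>0$, where $E_{\alpha,\beta}^{\rho}(z)=\sum_{n\ge0}\frac{(\rho)_n z^n}{\Gamma(\alpha n+\beta)n!}$ and $(\rho)_n=\Gamma(\rho+n)/\Gamma(\rho)$ is the Pochhammer symbol. For $\nu\in\mathbb{C}$, the $\nu$th iteration of the Prabhakar operator is defined by $$\left(\mathcal{E}_{\alpha,\beta;c+}^{\omega,\rho}\right)^{\nu}f(x)=\frac{\mathrm{d}^m}{\mathrm{d}x^m}\mathcal{E}_{\alpha,m+\nu\beta;c+}^{\omega,\nu\rho}f(x),\qquad m=\max\big(0,\lfloor\mathrm{Re}(-\nu\beta)\rfloor+1\big);$$ in particular, when $\mathrm{Re}(\nu\beta)>0$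 this is $\mathcal{E}_{\alpha,\nu\beta;c+}^{\omega,\nu\rho}f$. *)

theory Defs
  imports "HOL-Analysis.Analysis"
begin

text \<open>Three-parameter Mittag-Leffler (Prabhakar) function
  E^rho_{alpha,beta}(z) = sum_n (rho)_n z^n / (Gamma(alpha n + beta) n!).
  The reciprocal Gamma function rGamma = 1/Gamma is used (entire).\<close>
definition prab_ML :: "complex \<Rightarrow> complex \<Rightarrow> complex \<Rightarrow> complex \<Rightarrow> complex" where
  "prab_ML \<alpha> \<beta> \<rho> z =
     (\<Sum>n. pochhammer \<rho> n * z ^ n * rGamma (\<alpha> * of_nat n + \<beta>) / fact n)"

definition prab_int ::
  "complex \<Rightarrow> complex \<Rightarrow> complex \<Rightarrow> complex \<Rightarrow> real \<Rightarrow> (real \<Rightarrow> complex) \<Rightarrow> real \<Rightarrow> complex" where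
  "prab_int \<alpha> \<beta> \<omega> \<rho> c f x =
     (LINT t:{c..x}|lborel. (complex_of_real (x - t)) powr (\<beta> - 1)
        * prab_ML \<alpha> \<beta> \<rho> (\<omega> * (complex_of_real (x - t)) powr \<alpha>) * f t)"

definition prab_order :: "complex \<Rightarrow> complex \<Rightarrow> nat" where
  "prab_order \<nu> \<beta> = nat (\<lfloor>Re (- (\<nu> * \<beta>))\<rfloor> + 1)"

definition test_function :: "real \<Rightarrow> real \<Rightarrow> (real \<Rightarrow> real) \<Rightarrow> bool" where
  "test_function c d \<phi> \<longleftrightarrow>
     (\<forall>k x. ((deriv ^^ k) \<phi> has_real_derivative (deriv ^^ Suc k) \<phi> x) (at x)) \<and>
     (\<exists>a b. c < a \<and> a \<le> b \<and> b < d \<and> (\<forall>x. x \<notin> {a..b} \<longrightarrow> \<phi> x = 0))"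

text \<open>The nu-th iteration of the Prabhakar operator on (c,d),
  (d/dx)^m E^{omega, nu rho}_{alpha, m + nu beta; c+} f  with m = prab_order nu beta,
  where d/dx is the distributional derivative on (c,d): it is given by its
  action on test functions phi, namely (-1)^m int_c^d F(x) phi^(m)(x) dx.\<close>
definition prab_iter ::
  "complex \<Rightarrow> complex \<Rightarrow> complex \<Rightarrow> complex \<Rightarrow> real \<Rightarrow> real \<Rightarrow> complex \<Rightarrow> (real \<Rightarrow> complex)
     \<Rightarrow> (real \<Rightarrow> real) \<Rightarrow> complex" where
  "prab_iter \<alpha> \<beta> \<omega> \<rho> c d \<nu> f \<phi> =
     (let m = prab_order \<nu> \<beta> in
       (-1) ^ m * (LINT x:{c..d}|lborel.
          prab_int \<alpha> (of_nat m + \<nu> * \<beta>) \<omega> (\<nu> * \<rho>) c f x * complex_of_real ((deriv ^^ m) \<phi> x)))"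

end

theory Submission
  imports Defs
begin

lemma cpowr_real_alt: "complex_of_real u powr z = (if u = 0 then 0 else
   exp (z * (of_real (ln \<bar>u\<bar>) + (if u < 0 then \<i> * of_real pi else 0))))"
proof (cases "u < 0")
  case True
  have "Ln (complex_of_real u) = of_real (ln \<bar>u\<bar>) + \<i> * of_real pi"
  proof (rule Ln_unique)
    show "exp (complex_of_real (ln \<bar>u\<bar>) + \<i> * complex_of_real pi) = complex_of_real u"
      using True by (simp add: exp_add exp_of_real)
  qed auto
  with True show ?thesis by (simp add: powr_def)
next
  case False
  then show ?thesis by (auto simp: powr_def Ln_of_real)
qed
lemma meas_cpowr[measurable]: "(\<lambda>u::real. complex_of_real u powr z) \<in> borel_measurable borel"
  unfolding cpowr_real_alt by measurable

lemma Beta_real_pos: "a > 0 \<Longrightarrow> b > 0 \<Longrightarrow> Beta a b > (0::real)"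
  by (simp add: Beta_def Gamma_real_pos)

lemma nn_beta_scaled0:
  fixes a b u :: real assumes a: "a > 0" and b: "b > 0" and "u > 0"
  shows "(\<integral>\<^sup>+t. ennreal (indicator {0..u} t * t powr (a - 1) * (u - t) powr (b - 1)) \<partial>lborel)
     = ennreal (Beta a b * u powr (a + b - 1))"
proof -
  define B where "B = integral {0..1} (\<lambda>x. x powr (a - 1) * (1 - x) powr (b - 1))"
  have "(\<integral>\<^sup>+t. ennreal (indicator {0..u} t * t powr (a - 1) * (u - t) powr (b - 1)) \<partial>lborel) = 
          (\<integral>\<^sup>+t. ennreal (indicator {0..1} t * (u * t) powr (a - 1) * (u - u * t) powr (b - 1)) 
            \<partial>distr lborel borel ((*) (1 / u)))" (is "_ = nn_integral _ ?f")
    using \<open>u > 0\<close>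
    by (subst nn_integral_distr) (auto simp: indicator_def field_simps intro!: nn_integral_cong)
  also have "distr lborel borel ((*) (1 / u)) = density lborel (\<lambda>_. u)"
    using \<open>u > 0\<close> by (subst lborel_distr_mult) auto
  also have "nn_integral \<dots> ?f = (\<integral>\<^sup>+x. ennreal (indicator {0..1} x * (u * (u * x) powr (a - 1) *
                                          (u * (1 - x)) powr (b - 1))) \<partial>lborel)" using \<open>u > 0\<close>
    by (subst nn_integral_density) (auto simp: ennreal_mult' [symmetric] algebra_simps)
  also have "\<dots> = (\<integral>\<^sup>+x. ennreal (u powr (a + b - 1)) * 
                        ennreal (indicator {0..1} x * x powr (a - 1) *
                                   (1 - x) powr (b - 1)) \<partial>lborel)" using \<open>u > 0\<close> a b
    by (intro nn_integral_cong)
       (auto simp: indicator_def powr_mult powr_add powr_diff mult_ac ennreal_mult' [symmetric])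
  also have "\<dots> = ennreal (u powr (a + b - 1)) * 
                    (\<integral>\<^sup>+x. ennreal (indicator {0..1} x * x powr (a - 1) *
                                     (1 - x) powr (b - 1)) \<partial>lborel)"
    by (subst nn_integral_cmult) auto
  also have "((\<lambda>x. x powr (a - 1) * (1 - x) powr (b - 1)) has_integral 
               integral {0..1} (\<lambda>x. x powr (a - 1) * (1 - x) powr (b - 1))) {0..1}"
    using a b by (intro integrable_integral integrable_Beta')
  from nn_integral_has_integral_lebesgue[OF _ this] a b
    have "(\<integral>\<^sup>+x. ennreal (indicator {0..1} x * x powr (a - 1) *
                     (1 - x) powr (b - 1)) \<partial>lborel) = B" by (simp add: mult_ac B_def)
  moreover have "B = Beta a b" using has_integral_Beta_real[OF a b] unfolding B_def
    by (simp add: integral_unique)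
  ultimately show ?thesis using \<open>u > 0\<close> Beta_real_pos[OF a b]
    by (simp add: ennreal_mult [symmetric] mult_ac)
qed

lemma nn_beta_scaled:
  fixes x y s :: real assumes "x > 0" "y > 0" "s > 0"
  shows "(\<integral>\<^sup>+u. ennreal (indicator {0..s} u * (s - u) powr (x - 1) * u powr (y - 1)) \<partial>lborel)
     = ennreal (Beta x y * s powr (x + y - 1))"
  using nn_beta_scaled0[of y x s] assms by (simp add: mult_ac Beta_commute add_ac)

abbreviation cp :: "real \<Rightarrow> complex" where "cp \<equiv> complex_of_real"

lemma norm_cpowr[simp]: "t \<ge> 0 \<Longrightarrow> norm (cp t powr z) = t powr Re z"
  by (subst norm_powr_real_powr) auto

lemma cpowr_mult: "0 \<le> x \<Longrightarrow> 0 \<le> y \<Longrightarrow> cp (x * y) powr z = cp x powr z * cp y powr z"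
  by (subst of_real_mult, rule powr_times_real) auto

lemma Gamma_LINT:
  assumes "Re z > 0"
  shows "integrable lborel (\<lambda>t. indicator {0..} t *\<^sub>R (cp t powr (z-1) / cp (exp t)))"
    and "(\<integral>t. indicator {0..} t *\<^sub>R (cp t powr (z-1) / cp (exp t)) \<partial>lborel) = Gamma z"
proof -
  have "(\<integral>\<^sup>+t. ennreal (norm (indicator {0..} t *\<^sub>R (cp t powr (z-1) / cp (exp t)))) \<partial>lborel)
      = (\<integral>\<^sup>+t. ennreal (indicator {0..} t * t powr (Re z - 1) / exp t) \<partial>lborel)"
    by (intro nn_integral_cong) (auto simp: indicator_def norm_divide)
  also have "\<dots> = Gamma (Re z)" using assms by (simp add: Gamma_conv_nn_integral_real)
  finally have fin: "(\<integral>\<^sup>+t. ennreal (norm (indicator {0..} t *\<^sub>R (cp t powr (z-1) / cp (exp t)))) \<partial>lborel) < \<infinity>"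
    by simp
  show I: "integrable lborel (\<lambda>t. indicator {0..} t *\<^sub>R (cp t powr (z-1) / cp (exp t)))"
    by (rule integrableI_bounded[OF _ fin]) measurable
  have "set_integrable lborel {0..} (\<lambda>t. cp t powr (z-1) / cp (exp t))"
    using I by (simp add: set_integrable_def)
  from set_borel_integral_eq_integral(2)[OF this] Gamma_integral_complex[OF assms]
  show "(\<integral>t. indicator {0..} t *\<^sub>R (cp t powr (z-1) / cp (exp t)) \<partial>lborel) = Gamma z"
    by (simp add: set_lebesgue_integral_def integral_unique)
qed

lemma cbeta_scale:
  assumes "s > 0"
  shows "(\<integral>u. indicator {0..s} u *\<^sub>R (cp u powr (a-1) * cp (s-u) powr (b-1)) \<partial>lborel)
       = cp s powr (a+b-1) * (\<integral>u. indicator {0..1} u *\<^sub>R (cp u powr (a-1) * cp (1-u) powr (b-1)) \<partial>lborel)"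
proof -
  have "(\<integral>u. indicator {0..s} u *\<^sub>R (cp u powr (a-1) * cp (s-u) powr (b-1)) \<partial>lborel)
     = s *\<^sub>R (\<integral>x. indicator {0..s} (0 + s * x) *\<^sub>R (cp (0 + s*x) powr (a-1) * cp (s - (0 + s * x)) powr (b-1)) \<partial>lborel)"
    using lborel_integral_real_affine[of s "\<lambda>u. indicator {0..s} u *\<^sub>R (cp u powr (a-1) * cp (s-u) powr (b-1))" 0] assms
    by simp
  also have "(\<lambda>x. indicator {0..s} (0 + s * x) *\<^sub>R (cp (0 + s*x) powr (a-1) * cp (s - (0 + s * x)) powr (b-1)))
     = (\<lambda>x. (cp s powr (a-1) * cp s powr (b-1)) * (indicator {0..1} x *\<^sub>R (cp x powr (a-1) * cp (1-x) powr (b-1))))"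
  proof
    fix x
    show "indicator {0..s} (0 + s * x) *\<^sub>R (cp (0 + s*x) powr (a-1) * cp (s - (0 + s * x)) powr (b-1))
       = (cp s powr (a-1) * cp s powr (b-1)) * (indicator {0..1} x *\<^sub>R (cp x powr (a-1) * cp (1-x) powr (b-1)))"
    proof (cases "x \<in> {0..1}")
      case True
      have sx: "s - s * x = s * (1 - x)" by (simp add: algebra_simps)
      have e1: "cp (s * x) powr (a-1) = cp s powr (a-1) * cp x powr (a-1)"
        using True assms by (intro cpowr_mult) auto
      have e2: "cp (s - s * x) powr (b-1) = cp s powr (b-1) * cp (1-x) powr (b-1)"
        unfolding sx using True assms by (intro cpowr_mult) auto
      have "s * x \<in> {0..s}" using True assms by (auto simp: mult_le_cancel_left1)
      with True show ?thesis
        by (simp add: e1 e2 indicator_def mult_ac del: of_real_mult of_real_diff)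
    next
      case False
      with assms have "s * x \<notin> {0..s}"
        by (auto simp: zero_le_mult_iff mult_le_cancel_left1)
      with False show ?thesis by simp
    qed
  qed
  also have "s *\<^sub>R (\<integral>x. (cp s powr (a-1) * cp s powr (b-1)) * (indicator {0..1} x *\<^sub>R (cp x powr (a-1) * cp (1-x) powr (b-1))) \<partial>lborel)
     = (cp s * (cp s powr (a-1) * cp s powr (b-1))) * (\<integral>u. indicator {0..1} u *\<^sub>R (cp u powr (a-1) * cp (1-u) powr (b-1)) \<partial>lborel)"
    by (subst integral_mult_right_zero) (simp add: scaleR_conv_of_real mult_ac)
  also have "cp s * (cp s powr (a-1) * cp s powr (b-1)) = cp s powr (a+b-1)"
  proof -
    have "cp s powr (a+b-1) = cp s powr (1 + (a-1) + (b-1))" by (simp add: algebra_simps)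
    also have "\<dots> = cp s powr 1 * cp s powr (a-1) * cp s powr (b-1)" by (simp only: powr_add)
    finally show ?thesis using assms by (simp add: mult_ac)
  qed
  finally show ?thesis .
qed


lemma norm_cpowr_diff[simp]: "x \<le> v \<Longrightarrow> norm ((cp v - cp x) powr z) = (v - x) powr Re z"
  using norm_cpowr[of "v-x" z] by simp

lemma norm_beta_integrand: "0 \<le> x \<Longrightarrow> x \<le> v \<Longrightarrow>
  cmod (cp x powr (a - 1) * (cp v - cp x) powr (b - 1)) = x powr (Re a - 1) * (v - x) powr (Re b - 1)"
  apply (simp only: norm_mult)
  apply (subst norm_cpowr, simp)
  apply (subst norm_cpowr_diff, simp)
  apply simp
  done

lemma Re_pos_not_nonpos_Ints: "Re z > 0 \<Longrightarrow> z \<notin> \<int>\<^sub>\<le>\<^sub>0"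
  by (auto elim!: nonpos_Ints_cases)

lemma Beta_integral_complex:
  assumes a: "Re a > 0" and b: "Re b > 0"
  shows "(\<integral>u. indicator {0..1} u *\<^sub>R (cp u powr (a-1) * cp (1-u) powr (b-1)) \<partial>lborel) = Beta a b"
proof -
  define J1 where "J1 = (\<integral>u. indicator {0..1} u *\<^sub>R (cp u powr (a-1) * cp (1-u) powr (b-1)) \<partial>lborel)"
  define f where "f = (\<lambda>(t::real, v::real). if 0 \<le> t \<and> t \<le> v then cp t powr (a-1) * cp (v-t) powr (b-1) / cp (exp v) else 0)"
  have fm[measurable]: "f \<in> borel_measurable (lborel \<Otimes>\<^sub>M lborel)"
    unfolding f_def by measurable
  have inner_nn: "(\<integral>\<^sup>+t. ennreal (norm (f (t,v))) \<partial>lborel) =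
      (\<integral>\<^sup>+t. ennreal (indicator {0..v} t * t powr (Re a - 1) * (v - t) powr (Re b - 1)) \<partial>lborel) * ennreal (1 / exp v)" for v
    unfolding f_def
    by (subst nn_integral_multc[symmetric]) 
       (auto intro!: nn_integral_cong simp: indicator_def norm_divide ennreal_mult'[symmetric] norm_beta_integrand)
  have "(\<integral>\<^sup>+p. ennreal (norm (f p)) \<partial>(lborel \<Otimes>\<^sub>M lborel)) =
        (\<integral>\<^sup>+v. (\<integral>\<^sup>+t. ennreal (norm (f (t,v))) \<partial>lborel) \<partial>lborel)"
    by (subst lborel_pair.nn_integral_snd) auto
  also have "\<dots> = (\<integral>\<^sup>+v. ennreal (Beta (Re a) (Re b)) * ennreal (indicator {0..} v * v powr (Re a + Re b - 1) / exp v) \<partial>lborel)"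
  proof (intro nn_integral_cong_AE eventually_mono[OF AE_lborel_singleton[of 0]])
    fix v :: real assume "v \<noteq> 0"
    show "(\<integral>\<^sup>+t. ennreal (norm (f (t,v))) \<partial>lborel) =
       ennreal (Beta (Re a) (Re b)) * ennreal (indicator {0..} v * v powr (Re a + Re b - 1) / exp v)"
    proof (cases "v > 0")
      case True
      show ?thesis unfolding inner_nn using True a b
        by (subst nn_beta_scaled0) (auto simp: ennreal_mult[symmetric] Beta_real_pos less_imp_le)
    next
      case False
      then have "\<And>t. f (t, v) = 0" unfolding f_def by auto
      with False \<open>v \<noteq> 0\<close> show ?thesis by (simp add: indicator_def)
    qed
  qed
  also have "\<dots> = ennreal (Beta (Re a) (Re b)) * ennreal (Gamma (Re a + Re b))"
    using a b by (subst nn_integral_cmult) (auto simp: Gamma_conv_nn_integral_real)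
  finally have fin: "(\<integral>\<^sup>+p. ennreal (norm (f p)) \<partial>(lborel \<Otimes>\<^sub>M lborel)) < \<infinity>"
    by (simp add: ennreal_mult_less_top)
  have fint: "integrable (lborel \<Otimes>\<^sub>M lborel) f"
    by (rule integrableI_bounded[OF fm fin])
  have fub: "(\<integral>v. (\<integral>t. f (t,v) \<partial>lborel) \<partial>lborel) = (\<integral>t. (\<integral>v. f (t,v) \<partial>lborel) \<partial>lborel)"
    using lborel_pair.Fubini_integral[of "\<lambda>t v. f (t,v)"] fint by simp
  have L: "(\<integral>t. f (t,v) \<partial>lborel) = indicator {0..} v *\<^sub>R (cp v powr (a+b-1) / cp (exp v)) * J1" for v
  proof (cases "v > 0")
    case True
    have "(\<integral>t. f (t,v) \<partial>lborel) = (\<integral>t. indicator {0..v} t *\<^sub>R (cp t powr (a-1) * cp (v-t) powr (b-1)) / cp (exp v) \<partial>lborel)"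
      unfolding f_def by (intro Bochner_Integration.integral_cong) (auto simp: indicator_def)
    also have "\<dots> = (\<integral>t. indicator {0..v} t *\<^sub>R (cp t powr (a-1) * cp (v-t) powr (b-1)) \<partial>lborel) / cp (exp v)"
      by (rule integral_divide_zero)
    also have "\<dots> = cp v powr (a+b-1) * J1 / cp (exp v)"
      using cbeta_scale[OF True, of a b] by (simp add: J1_def)
    finally show ?thesis using True by (simp add: indicator_def)
  next
    case False
    then have "\<And>t. f (t, v) = 0" unfolding f_def by auto
    with False show ?thesis by (auto simp: indicator_def)
  qed
  have R: "(\<integral>v. f (t,v) \<partial>lborel) = indicator {0..} t *\<^sub>R (cp t powr (a-1) / cp (exp t)) * Gamma b" for t
  proof (cases "t \<ge> 0")
    case True
    have "(\<integral>v. f (t,v) \<partial>lborel) = (\<integral>x. f (t, t + 1 * x) \<partial>lborel)"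
      using lborel_integral_real_affine[of 1 "\<lambda>v. f (t,v)" t] by simp
    also have "\<dots> = (\<integral>x. (cp t powr (a-1) / cp (exp t)) * (indicator {0..} x *\<^sub>R (cp x powr (b-1) / cp (exp x))) \<partial>lborel)"
      unfolding f_def using True by (intro Bochner_Integration.integral_cong) (auto simp: indicator_def exp_add)
    also have "\<dots> = (cp t powr (a-1) / cp (exp t)) * Gamma b"
      by (subst integral_mult_right_zero) (use Gamma_LINT(2)[OF b] in simp)
    finally show ?thesis using True by (simp add: indicator_def)
  next
    case False
    then have "\<And>v. f (t, v) = 0" unfolding f_def by auto
    with False show ?thesis by (auto simp: indicator_def)
  qed
  have "J1 * Gamma (a+b) = Gamma a * Gamma b"
  proof -
    have "(\<integral>v. (\<integral>t. f (t,v) \<partial>lborel) \<partial>lborel) = Gamma (a+b) * J1"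
      unfolding L by (subst integral_mult_left_zero) (use Gamma_LINT(2)[of "a+b"] a b in simp)
    moreover have "(\<integral>t. (\<integral>v. f (t,v) \<partial>lborel) \<partial>lborel) = Gamma a * Gamma b"
      unfolding R by (subst integral_mult_left_zero) (use Gamma_LINT(2)[OF a] in simp)
    ultimately show ?thesis using fub by (simp add: mult_ac)
  qed
  moreover have "Gamma (a+b) \<noteq> 0"
    using a b by (intro Gamma_nonzero Re_pos_not_nonpos_Ints) simp
  ultimately have "J1 = Gamma a * Gamma b / Gamma (a+b)" by (simp add: field_simps)
  thus ?thesis by (simp add: J1_def Beta_def)
qed


lemma norm_cpowr_1m[simp]: "x \<le> 1 \<Longrightarrow> norm ((1 - cp x) powr z) = (1 - x) powr Re z"
  using norm_cpowr[of "1-x" z] by simp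

lemma real_pos_not_nonpos_Ints: "(y::real) > 0 \<Longrightarrow> y \<notin> \<int>\<^sub>\<le>\<^sub>0"
  using nonpos_Ints_nonpos by force

lemma norm_Beta_le:
  assumes a: "Re a > 0" and b: "Re b > 0"
  shows "norm (Beta a b) \<le> Beta (Re a) (Re b)"
proof -
  have nn: "(\<integral>\<^sup>+u. ennreal (norm (indicator {0..1} u *\<^sub>R (cp u powr (a-1) * cp (1-u) powr (b-1)))) \<partial>lborel)
     = ennreal (Beta (Re a) (Re b))"
  proof -
    have "(\<integral>\<^sup>+u. ennreal (norm (indicator {0..1} u *\<^sub>R (cp u powr (a-1) * cp (1-u) powr (b-1)))) \<partial>lborel)
     = (\<integral>\<^sup>+t. ennreal (indicator {0..1} t * t powr (Re a - 1) * (1 - t) powr (Re b - 1)) \<partial>lborel)"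
      by (intro nn_integral_cong) (auto simp: indicator_def norm_mult)
    also have "\<dots> = ennreal (Beta (Re a) (Re b))"
      using nn_beta_scaled0[of "Re a" "Re b" 1] a b by simp
    finally show ?thesis .
  qed
  have int: "integrable lborel (\<lambda>u. indicator {0..1} u *\<^sub>R (cp u powr (a-1) * cp (1-u) powr (b-1)))"
    apply (rule integrableI_bounded)
     apply measurable
    apply (use nn in simp)
    done
  have "ennreal (norm (Beta a b)) \<le>
      (\<integral>\<^sup>+u. ennreal (norm (indicator {0..1} u *\<^sub>R (cp u powr (a-1) * cp (1-u) powr (b-1)))) \<partial>lborel)"
    unfolding Beta_integral_complex[OF a b, symmetric] by (rule integral_norm_bound_ennreal[OF int])
  also note nn
  finally show ?thesis using Beta_real_pos[OF a b] by (simp add: ennreal_le_iff)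
qed

lemma Beta_real_bound:
  fixes x a :: real assumes "x > 0" "0 < a" "a < 1"
  shows "Beta x a \<le> Gamma a * (x + a) powr (1 - a) / x"
proof -
  have "(ln \<circ> Gamma) ((1 - (1 - a)) *\<^sub>R (x + a) + (1 - a) *\<^sub>R (x + a + 1))
      \<le> (1 - (1 - a)) * (ln \<circ> Gamma) (x + a) + (1 - a) * (ln \<circ> Gamma) (x + a + 1)"
    by (rule convex_onD[OF log_convex_Gamma_real]) (use assms in auto)
  moreover have "(1 - (1 - a)) *\<^sub>R (x + a) + (1 - a) *\<^sub>R (x + a + 1) = x + 1"
    by (simp add: algebra_simps)
  moreover have "Gamma (x + a + 1) = (x + a) * Gamma (x + a)"
    using Gamma_plus1[of "x + a"] real_pos_not_nonpos_Ints[of "x + a"] assms by auto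
  moreover have gp: "Gamma (x+a) > 0" using assms by simp
  ultimately have "ln (Gamma (x + 1)) \<le> a * ln (Gamma (x + a)) + (1 - a) * (ln (x + a) + ln (Gamma (x + a)))"
    using assms by (simp add: ln_mult)
  also have "\<dots> = ln (Gamma (x + a)) + (1 - a) * ln (x + a)" by (simp add: algebra_simps)
  finally have "exp (ln (Gamma (x + 1))) \<le> exp (ln (Gamma (x + a)) + (1 - a) * ln (x + a))"
    by simp
  hence "Gamma (x + 1) \<le> Gamma (x + a) * (x + a) powr (1 - a)"
    using assms by (simp add: exp_add powr_def mult_ac)
  moreover have "Gamma (x + 1) = x * Gamma x"
    using Gamma_plus1[of x] real_pos_not_nonpos_Ints[of x] assms by auto
  ultimately have *: "x * Gamma x \<le> Gamma (x + a) * (x + a) powr (1 - a)" by simp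
  have "Beta x a = Gamma x * Gamma a / Gamma (x + a)" by (simp add: Beta_def)
  also have "\<dots> \<le> Gamma a * (x + a) powr (1 - a) / x"
    using * assms by (simp add: field_simps)
  finally show ?thesis .
qed

lemma Beta_real_tendsto_0:
  fixes a :: real assumes "a > 0"
  shows "((\<lambda>x. Beta x a) \<longlongrightarrow> 0) at_top"
proof -
  define a' where "a' = min a (1/2)"
  have a': "0 < a'" "a' < 1" "a' \<le> a" using assms by (auto simp: a'_def)
  have ev: "eventually (\<lambda>x. 0 \<le> Beta x a \<and> Beta x a \<le> Gamma a' * 2 powr (1 - a') * x powr (- a')) at_top"
    using eventually_ge_at_top[of "1::real"]
  proof eventually_elim
    case (elim x)
    have b0: "Beta x a \<le> Beta x a'" using a' elim by (intro Beta_real_mono) auto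
    have b1: "Beta x a' \<le> Gamma a' * (x + a') powr (1 - a') / x" using a' elim by (intro Beta_real_bound) auto
    have b2: "Gamma a' * (x + a') powr (1 - a') / x \<le> Gamma a' * (2 * x) powr (1 - a') / x"
      using a' elim by (intro divide_right_mono mult_left_mono powr_mono2) auto
    have b3: "Gamma a' * (2 * x) powr (1 - a') / x = Gamma a' * (2 powr (1 - a') * x powr (- a'))"
      using elim by (simp add: powr_mult powr_diff powr_minus field_simps)
    have "Beta x a \<le> Gamma a' * (2 powr (1 - a') * x powr (- a'))"
      using b0 b1 b2 b3 by linarith
    moreover have "0 \<le> Beta x a" using Beta_real_pos[of x a] elim assms by simp
    ultimately show ?case by (simp add: mult_ac)
  qed
  have "((\<lambda>x. Gamma a' * 2 powr (1 - a') * x powr (- a')) \<longlongrightarrow> Gamma a' * 2 powr (1 - a') * 0) at_top"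
    using a' by (intro tendsto_intros tendsto_neg_powr filterlim_ident) auto
  hence "((\<lambda>x. Gamma a' * 2 powr (1 - a') * x powr (- a')) \<longlongrightarrow> 0) at_top" by simp
  thus ?thesis
    by (rule tendsto_sandwich[rotated 2, OF tendsto_const]) (use ev in \<open>auto elim: eventually_mono\<close>)
qed

lemma rGamma_add_Beta:
  assumes "Re w > 0" "Re a > 0"
  shows "rGamma (w + a) = rGamma w * rGamma a * Beta w a"
proof -
  have "Gamma w \<noteq> 0" "Gamma a \<noteq> 0" using assms by (auto intro!: Gamma_nonzero Re_pos_not_nonpos_Ints)
  thus ?thesis by (simp add: Beta_altdef rGamma_inverse_Gamma field_simps)
qed

definition mlc :: "complex \<Rightarrow> complex \<Rightarrow> complex \<Rightarrow> nat \<Rightarrow> complex" where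
  "mlc \<alpha> \<beta> \<rho> n = pochhammer \<rho> n * rGamma (\<alpha> * of_nat n + \<beta>) / fact n"

lemma prab_ML_alt: "prab_ML \<alpha> \<beta> \<rho> z = (\<Sum>n. mlc \<alpha> \<beta> \<rho> n * z ^ n)"
  by (simp add: prab_ML_def mlc_def mult_ac)

lemma mlc_summable:
  assumes \<alpha>: "Re \<alpha> > 0" and \<beta>: "Re \<beta> > 0" and r: "r \<ge> 0"
  shows "summable (\<lambda>n. norm (mlc \<alpha> \<beta> \<rho> n) * r ^ n)"
proof -
  define C where "C = (norm \<rho> + 1) * r * norm (rGamma \<alpha>)"
  have C: "C \<ge> 0" using r by (simp add: C_def)
  define w where "w n = \<alpha> * of_nat n + \<beta>" for n
  have Rew: "Re (w n) = real n * Re \<alpha> + Re \<beta>" for n by (simp add: w_def)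
  have Rew_pos: "Re (w n) > 0" for n unfolding Rew using \<alpha> \<beta>
    by (intro add_nonneg_pos mult_nonneg_nonneg) auto
  have "filterlim (\<lambda>n. Re \<beta> + Re \<alpha> * real n) at_top sequentially"
    by (intro filterlim_tendsto_add_at_top[OF tendsto_const] filterlim_tendsto_pos_mult_at_top[OF tendsto_const \<alpha>]
      filterlim_real_sequentially)
  hence lim: "filterlim (\<lambda>n. real n * Re \<alpha> + Re \<beta>) at_top sequentially"
    by (simp add: add.commute mult.commute)
  have "((\<lambda>n. Beta (real n * Re \<alpha> + Re \<beta>) (Re \<alpha>)) \<longlongrightarrow> 0) sequentially"
    using filterlim_compose[OF Beta_real_tendsto_0[OF \<alpha>] lim] .
  hence "((\<lambda>n. C * Beta (real n * Re \<alpha> + Re \<beta>) (Re \<alpha>)) \<longlongrightarrow> C * 0) sequentially"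
    by (intro tendsto_intros)
  hence "eventually (\<lambda>n. C * Beta (real n * Re \<alpha> + Re \<beta>) (Re \<alpha>) < 1/2) sequentially"
    by (intro order_tendstoD) auto
  then obtain N where N: "\<And>n. n \<ge> N \<Longrightarrow> C * Beta (real n * Re \<alpha> + Re \<beta>) (Re \<alpha>) < 1/2"
    by (auto simp: eventually_sequentially)
  show ?thesis
  proof (rule summable_ratio_test[of "1/2" N])
    fix n assume n: "n \<ge> N"
    have rG: "rGamma (w (Suc n)) = rGamma (w n) * rGamma \<alpha> * Beta (w n) \<alpha>"
    proof -
      have "w (Suc n) = w n + \<alpha>" by (simp add: w_def algebra_simps)
      thus ?thesis using rGamma_add_Beta[OF Rew_pos[of n] \<alpha>] by simp
    qed
    have mlcS: "mlc \<alpha> \<beta> \<rho> (Suc n) = mlc \<alpha> \<beta> \<rho> n * ((\<rho> + of_nat n) / of_nat (Suc n) * rGamma \<alpha> * Beta (w n) \<alpha>)"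
      unfolding mlc_def w_def[symmetric] rG by (simp add: pochhammer_Suc field_simps fact_Suc)
    define q where "q = (\<rho> + of_nat n) / (of_nat (Suc n) :: complex)"
    have "norm q \<le> norm \<rho> + 1"
    proof -
      have "norm (\<rho> + of_nat n) \<le> norm \<rho> + real n" using norm_triangle_ineq[of \<rho> "of_nat n"] by simp
      also have "\<dots> \<le> (norm \<rho> + 1) * real (Suc n)" by (simp add: algebra_simps)
      finally have "norm (\<rho> + of_nat n) \<le> (norm \<rho> + 1) * real (Suc n)" .
      moreover have "norm q = norm (\<rho> + of_nat n) / real (Suc n)"
        unfolding q_def by (simp only: norm_divide norm_of_nat)
      ultimately show ?thesis by (simp add: divide_le_eq)
    qed
    moreover have "norm (Beta (w n) \<alpha>) \<le> Beta (real n * Re \<alpha> + Re \<beta>) (Re \<alpha>)"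
      using norm_Beta_le[OF Rew_pos[of n] \<alpha>] by (simp add: Rew)
    moreover have "norm (q * rGamma \<alpha> * Beta (w n) \<alpha>) = norm q * norm (rGamma \<alpha>) * norm (Beta (w n) \<alpha>)"
      by (simp only: norm_mult)
    ultimately have "norm (q * rGamma \<alpha> * Beta (w n) \<alpha>) * r
       \<le> (norm \<rho> + 1) * norm (rGamma \<alpha>) * Beta (real n * Re \<alpha> + Re \<beta>) (Re \<alpha>) * r"
      using r by (auto intro!: mult_mono mult_right_mono)
    also have "\<dots> = C * Beta (real n * Re \<alpha> + Re \<beta>) (Re \<alpha>)" by (simp add: C_def mult_ac)
    also have "\<dots> \<le> 1/2" using N[OF n] by simp
    finally have le: "norm (q * rGamma \<alpha> * Beta (w n) \<alpha>) * r \<le> 1/2" .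
    have "norm (norm (mlc \<alpha> \<beta> \<rho> (Suc n)) * r ^ Suc n) =
       (norm (mlc \<alpha> \<beta> \<rho> n) * r ^ n) * (norm (q * rGamma \<alpha> * Beta (w n) \<alpha>) * r)"
      unfolding mlcS q_def[symmetric] using r by (simp add: norm_mult abs_mult mult_ac)
    also have "\<dots> \<le> (norm (mlc \<alpha> \<beta> \<rho> n) * r ^ n) * (1/2)"
      by (intro mult_left_mono le) (use r in auto)
    finally show "norm (norm (mlc \<alpha> \<beta> \<rho> (Suc n)) * r ^ Suc n) \<le> 1/2 * norm (norm (mlc \<alpha> \<beta> \<rho> n) * r ^ n)"
      using r by (simp add: mult_ac)
  qed simp
qed


definition ker :: "complex \<Rightarrow> complex \<Rightarrow> complex \<Rightarrow> complex \<Rightarrow> real \<Rightarrow> complex" where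
  "ker \<alpha> \<omega> \<gamma> \<rho> s = (if s > 0 then cp s powr (\<gamma> - 1) * prab_ML \<alpha> \<gamma> \<rho> (\<omega> * cp s powr \<alpha>) else 0)"

lemma mlser_summable_norm:
  assumes "Re \<alpha> > 0" "Re \<gamma> > 0"
  shows "summable (\<lambda>n. norm (mlc \<alpha> \<gamma> \<rho> n * z ^ n))"
  using mlc_summable[OF assms, of "norm z" \<rho>] by (simp add: norm_mult norm_power)

lemma mlser_isCont:
  assumes "Re \<alpha> > 0" "Re \<gamma> > 0"
  shows "isCont (prab_ML \<alpha> \<gamma> \<rho>) z"
proof -
  have eq: "prab_ML \<alpha> \<gamma> \<rho> = (\<lambda>z. \<Sum>n. mlc \<alpha> \<gamma> \<rho> n * z ^ n)"
    by (rule ext) (simp add: prab_ML_alt)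
  define K where "K = complex_of_real (norm z + 1)"
  have "summable (\<lambda>n. mlc \<alpha> \<gamma> \<rho> n * K ^ n)"
    by (rule summable_norm_cancel[OF mlser_summable_norm[OF assms]])
  moreover have "norm z < norm K" by (simp add: K_def)
  ultimately show ?thesis unfolding eq by (rule isCont_powser)
qed

lemma mlser_measurable[measurable]:
  assumes "Re \<alpha> > 0" "Re \<gamma> > 0"
  shows "prab_ML \<alpha> \<gamma> \<rho> \<in> borel_measurable borel"
  by (rule borel_measurable_continuous_onI) (use mlser_isCont[OF assms] in \<open>simp add: continuous_at_imp_continuous_on\<close>)

lemma ker_measurable[measurable]:
  assumes "Re \<alpha> > 0" "Re \<gamma> > 0"
  shows "ker \<alpha> \<omega> \<gamma> \<rho> \<in> borel_measurable borel"
proof -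
  have [measurable]: "prab_ML \<alpha> \<gamma> \<rho> \<in> borel_measurable borel" using mlser_measurable[OF assms] .
  show ?thesis unfolding ker_def[abs_def] by measurable
qed

lemma mlser_bound:
  assumes "Re \<alpha> > 0" "Re \<gamma> > 0" "norm z \<le> R"
  shows "norm (prab_ML \<alpha> \<gamma> \<rho> z) \<le> (\<Sum>n. norm (mlc \<alpha> \<gamma> \<rho> n) * R ^ n)"
proof -
  have R: "R \<ge> 0" using assms(3) norm_ge_zero order_trans by blast
  have "norm (prab_ML \<alpha> \<gamma> \<rho> z) \<le> (\<Sum>n. norm (mlc \<alpha> \<gamma> \<rho> n * z ^ n))"
    unfolding prab_ML_alt by (rule summable_norm[OF mlser_summable_norm[OF assms(1,2)]])
  also have "\<dots> \<le> (\<Sum>n. norm (mlc \<alpha> \<gamma> \<rho> n) * R ^ n)"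
    using mlser_summable_norm[OF assms(1,2)] mlc_summable[OF assms(1,2) R]
    by (intro suminf_le) (auto simp: norm_mult norm_power intro!: mult_left_mono power_mono assms(3))
  finally show ?thesis .
qed

lemma ker_nonpos[simp]: "s \<le> 0 \<Longrightarrow> ker \<alpha> \<omega> \<gamma> \<rho> s = 0"
  by (simp add: ker_def)

lemma ker_bound:
  assumes "Re \<alpha> > 0" "Re \<gamma> > 0" "R \<ge> 0"
  shows "\<exists>M\<ge>0. \<forall>s. 0 < s \<longrightarrow> s \<le> R \<longrightarrow> norm (ker \<alpha> \<omega> \<gamma> \<rho> s) \<le> M * s powr (Re \<gamma> - 1)"
proof (intro exI conjI allI impI)
  define M where "M = (\<Sum>n. norm (mlc \<alpha> \<gamma> \<rho> n) * (norm \<omega> * R powr Re \<alpha>) ^ n)"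
  show "M \<ge> 0" unfolding M_def
    by (intro suminf_nonneg mlc_summable assms) auto
  fix s :: real assume s: "0 < s" "s \<le> R"
  have "norm (\<omega> * cp s powr \<alpha>) \<le> norm \<omega> * R powr Re \<alpha>"
    using s assms by (auto simp: norm_mult intro!: mult_left_mono powr_mono2)
  from mlser_bound[OF assms(1,2) this] have "norm (prab_ML \<alpha> \<gamma> \<rho> (\<omega> * cp s powr \<alpha>)) \<le> M"
    by (simp add: M_def)
  thus "norm (ker \<alpha> \<omega> \<gamma> \<rho> s) \<le> M * s powr (Re \<gamma> - 1)"
    using s by (simp add: ker_def norm_mult mult_ac mult_left_mono)
qed

lemma cpowr_pow: "s > 0 \<Longrightarrow> (cp s powr a) ^ n = cp s powr (of_nat n * a)"
  by (simp add: powr_def exp_of_nat_mult[symmetric] mult_ac)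

lemma ker_sums:
  assumes "Re \<alpha> > 0" "Re \<gamma> > 0" "s > 0"
  shows "(\<lambda>n. mlc \<alpha> \<gamma> \<rho> n * \<omega> ^ n * cp s powr (\<alpha> * of_nat n + \<gamma> - 1)) sums ker \<alpha> \<omega> \<gamma> \<rho> s"
proof -
  have "(\<lambda>n. mlc \<alpha> \<gamma> \<rho> n * (\<omega> * cp s powr \<alpha>) ^ n) sums prab_ML \<alpha> \<gamma> \<rho> (\<omega> * cp s powr \<alpha>)"
    unfolding prab_ML_alt by (rule summable_sums[OF summable_norm_cancel[OF mlser_summable_norm[OF assms(1,2)]]])
  from sums_mult[OF this, of "cp s powr (\<gamma> - 1)"]
  have "(\<lambda>n. cp s powr (\<gamma> - 1) * (mlc \<alpha> \<gamma> \<rho> n * (\<omega> * cp s powr \<alpha>) ^ n)) sums ker \<alpha> \<omega> \<gamma> \<rho> s"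
    using assms by (simp add: ker_def)
  moreover have "cp s powr (\<gamma> - 1) * (mlc \<alpha> \<gamma> \<rho> n * (\<omega> * cp s powr \<alpha>) ^ n)
      = mlc \<alpha> \<gamma> \<rho> n * \<omega> ^ n * cp s powr (\<alpha> * of_nat n + \<gamma> - 1)" for n
  proof -
    have "cp s powr (\<alpha> * of_nat n + \<gamma> - 1) = cp s powr (of_nat n * \<alpha>) * cp s powr (\<gamma> - 1)"
      by (simp add: powr_add[symmetric] algebra_simps)
    thus ?thesis using assms by (simp add: power_mult_distrib cpowr_pow mult_ac)
  qed
  ultimately show ?thesis by simp
qed

lemma ker_term_norm:
  assumes "s > 0"
  shows "norm (mlc \<alpha> \<gamma> \<rho> n * \<omega> ^ n * cp s powr (\<alpha> * of_nat n + \<gamma> - 1))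
     = norm (mlc \<alpha> \<gamma> \<rho> n) * (norm \<omega> * s powr Re \<alpha>) ^ n * s powr (Re \<gamma> - 1)"
proof -
  have e: "s powr (Re \<alpha> * real n + Re \<gamma> - 1) = s powr (Re \<gamma> - 1) * s powr (Re \<alpha> * real n)"
    by (simp add: powr_add[symmetric] algebra_simps)
  show ?thesis using assms e
    by (simp add: norm_mult norm_power power_mult_distrib powr_powr mult_ac flip: powr_realpow)
qed


lemma rbeta_full:
  fixes x y s :: real assumes x: "x > 0" and y: "y > 0" and s: "s > 0"
  shows "integrable lborel (\<lambda>u. indicator {0..s} u * ((s - u) powr (x - 1) * u powr (y - 1)))"
    and "(\<integral>u. indicator {0..s} u * ((s - u) powr (x - 1) * u powr (y - 1)) \<partial>lborel) = Beta x y * s powr (x + y - 1)"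
proof -
  have nn: "(\<integral>\<^sup>+u. ennreal (indicator {0..s} u * ((s - u) powr (x - 1) * u powr (y - 1))) \<partial>lborel)
     = ennreal (Beta x y * s powr (x + y - 1))"
    using nn_beta_scaled[OF x y s] by (simp add: mult_ac)
  have "integrable lborel (\<lambda>u. indicator {0..s} u * ((s - u) powr (x - 1) * u powr (y - 1))) \<and>
        (\<integral>u. indicator {0..s} u * ((s - u) powr (x - 1) * u powr (y - 1)) \<partial>lborel) = Beta x y * s powr (x + y - 1)"
    by (subst nn_integral_eq_integrable[symmetric])
       (use nn Beta_real_pos[OF x y] in \<open>auto intro!: AE_I2 simp: indicator_def\<close>)
  thus "integrable lborel (\<lambda>u. indicator {0..s} u * ((s - u) powr (x - 1) * u powr (y - 1)))"
    and "(\<integral>u. indicator {0..s} u * ((s - u) powr (x - 1) * u powr (y - 1)) \<partial>lborel) = Beta x y * s powr (x + y - 1)"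
    by auto
qed

lemma cbeta_full:
  assumes p: "Re p > 0" and q: "Re q > 0" and s: "s > 0"
  shows "integrable lborel (\<lambda>u. indicator {0..s} u *\<^sub>R (cp (s - u) powr (p - 1) * cp u powr (q - 1)))"
    and "(\<integral>u. indicator {0..s} u *\<^sub>R (cp (s - u) powr (p - 1) * cp u powr (q - 1)) \<partial>lborel) = Beta p q * cp s powr (p + q - 1)"
proof -
  show "integrable lborel (\<lambda>u. indicator {0..s} u *\<^sub>R (cp (s - u) powr (p - 1) * cp u powr (q - 1)))"
  proof (rule Bochner_Integration.integrable_bound[OF rbeta_full(1)[OF p q s]])
    show "(\<lambda>u. indicator {0..s} u *\<^sub>R (cp (s - u) powr (p - 1) * cp u powr (q - 1))) \<in> borel_measurable lborel"
      by measurable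
    show "AE u in lborel. norm (indicator {0..s} u *\<^sub>R (cp (s - u) powr (p - 1) * cp u powr (q - 1)))
         \<le> norm (indicator {0..s} u * ((s - u) powr (Re p - 1) * u powr (Re q - 1)))"
      by (intro AE_I2) (auto simp: indicator_def norm_mult)
  qed
  have "(\<integral>u. indicator {0..s} u *\<^sub>R (cp (s - u) powr (p - 1) * cp u powr (q - 1)) \<partial>lborel)
      = (\<integral>u. indicator {0..s} u *\<^sub>R (cp u powr (q - 1) * cp (s - u) powr (p - 1)) \<partial>lborel)"
    by (simp add: mult.commute)
  also have "\<dots> = cp s powr (q + p - 1) * Beta q p"
    using cbeta_scale[OF s, of q p] Beta_integral_complex[OF q p] by simp
  finally show "(\<integral>u. indicator {0..s} u *\<^sub>R (cp (s - u) powr (p - 1) * cp u powr (q - 1)) \<partial>lborel) = Beta p q * cp s powr (p + q - 1)"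
    by (simp add: Beta_commute add.commute mult.commute)
qed

lemma kterm_summable:
  assumes "Re \<alpha> > 0" "Re \<gamma> > 0" "t \<ge> 0"
  shows "summable (\<lambda>n. norm (mlc \<alpha> \<gamma> \<rho> n * \<omega> ^ n * cp t powr (\<alpha> * of_nat n + \<gamma> - 1)))"
proof (cases "t > 0")
  case True
  show ?thesis unfolding ker_term_norm[OF True]
    by (intro summable_mult2 mlc_summable assms) auto
qed (use assms in simp)

lemma kterm_sums:
  assumes "Re \<alpha> > 0" "Re \<gamma> > 0" "t \<ge> 0"
  shows "(\<lambda>n. mlc \<alpha> \<gamma> \<rho> n * \<omega> ^ n * cp t powr (\<alpha> * of_nat n + \<gamma> - 1)) sums ker \<alpha> \<omega> \<gamma> \<rho> t"
proof (cases "t > 0")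
  case True
  show ?thesis by (rule ker_sums[OF assms(1,2) True])
qed (use assms in simp)

lemma vandermonde_fact:
  fixes a b :: complex
  shows "(\<Sum>n\<le>N. pochhammer a n * pochhammer b (N - n) / (fact n * fact (N - n))) = pochhammer (a + b) N / fact N"
proof -
  have "pochhammer (a + b) N / fact N = (\<Sum>n\<le>N. of_nat (N choose n) * pochhammer a n * pochhammer b (N - n)) / fact N"
    by (simp add: pochhammer_binomial_sum)
  also have "\<dots> = (\<Sum>n\<le>N. of_nat (N choose n) * pochhammer a n * pochhammer b (N - n) / fact N)"
    by (simp add: sum_divide_distrib)
  also have "\<dots> = (\<Sum>n\<le>N. pochhammer a n * pochhammer b (N - n) / (fact n * fact (N - n)))"
    by (intro sum.cong refl) (simp add: binomial_fact field_simps)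
  finally show ?thesis by simp
qed

lemma mlc_Beta:
  assumes "Re \<alpha> > 0" "Re \<gamma>1 > 0" "Re \<gamma>2 > 0"
  shows "mlc \<alpha> \<gamma>1 \<rho>1 n * mlc \<alpha> \<gamma>2 \<rho>2 j * Beta (\<alpha> * of_nat n + \<gamma>1) (\<alpha> * of_nat j + \<gamma>2)
     = pochhammer \<rho>1 n * pochhammer \<rho>2 j / (fact n * fact j) * rGamma (\<alpha> * of_nat (n + j) + (\<gamma>1 + \<gamma>2))"
proof -
  have p: "Re (\<alpha> * of_nat n + \<gamma>1) > 0" "Re (\<alpha> * of_nat j + \<gamma>2) > 0"
    using assms by (auto intro!: add_nonneg_pos)
  have "rGamma (\<alpha> * of_nat (n + j) + (\<gamma>1 + \<gamma>2)) = rGamma ((\<alpha> * of_nat n + \<gamma>1) + (\<alpha> * of_nat j + \<gamma>2))"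
    by (simp add: algebra_simps)
  also have "\<dots> = rGamma (\<alpha> * of_nat n + \<gamma>1) * rGamma (\<alpha> * of_nat j + \<gamma>2) * Beta (\<alpha> * of_nat n + \<gamma>1) (\<alpha> * of_nat j + \<gamma>2)"
    by (rule rGamma_add_Beta[OF p])
  finally show ?thesis by (simp add: mlc_def field_simps)
qed


lemma ker_conv:
  assumes \<alpha>: "Re \<alpha> > 0" and g1: "Re \<gamma>1 > 0" and g2: "Re \<gamma>2 > 0" and s: "s > 0"
  shows "integrable lborel (\<lambda>u. indicator {0..s} u *\<^sub>R (ker \<alpha> \<omega> \<gamma>1 \<rho>1 (s - u) * ker \<alpha> \<omega> \<gamma>2 \<rho>2 u))"
    and "(\<integral>u. indicator {0..s} u *\<^sub>R (ker \<alpha> \<omega> \<gamma>1 \<rho>1 (s - u) * ker \<alpha> \<omega> \<gamma>2 \<rho>2 u) \<partial>lborel)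
           = ker \<alpha> \<omega> (\<gamma>1 + \<gamma>2) (\<rho>1 + \<rho>2) s"
proof -
  define a where "a = mlc \<alpha> \<gamma>1 \<rho>1"
  define b where "b = mlc \<alpha> \<gamma>2 \<rho>2"
  define P where "P n = \<alpha> * of_nat n + \<gamma>1" for n :: nat
  define Q where "Q n = \<alpha> * of_nat n + \<gamma>2" for n :: nat
  define A where "A n u = a n * \<omega> ^ n * cp (s - u) powr (\<alpha> * of_nat n + \<gamma>1 - 1)" for n u
  define B where "B n u = b n * \<omega> ^ n * cp u powr (\<alpha> * of_nat n + \<gamma>2 - 1)" for n u
  define F where "F N u = indicator {0..s} u *\<^sub>R (\<Sum>n\<le>N. A n u * B (N - n) u)" for N u
  have PQ: "Re (P n) > 0" "Re (Q n) > 0" for n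
    using \<alpha> g1 g2 by (auto simp: P_def Q_def intro!: add_nonneg_pos)
  have ReP: "Re (P n) = real n * Re \<alpha> + Re \<gamma>1" and ReQ: "Re (Q n) = real n * Re \<alpha> + Re \<gamma>2" for n
    by (simp_all add: P_def Q_def)

    have Fsums: "(\<lambda>N. F N u) sums (indicator {0..s} u *\<^sub>R (ker \<alpha> \<omega> \<gamma>1 \<rho>1 (s - u) * ker \<alpha> \<omega> \<gamma>2 \<rho>2 u))" for u
  proof (cases "u \<in> {0..s}")
    case True
    have sA: "summable (\<lambda>n. norm (A n u))" unfolding A_def a_def
      by (rule kterm_summable) (use True \<alpha> g1 in auto)
    have sB: "summable (\<lambda>n. norm (B n u))" unfolding B_def b_def
      by (rule kterm_summable) (use True \<alpha> g2 in auto)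
    have "(\<lambda>N. \<Sum>n\<le>N. A n u * B (N - n) u) sums ((\<Sum>n. A n u) * (\<Sum>n. B n u))"
      by (rule Cauchy_product_sums[OF sA sB])
    moreover have "(\<Sum>n. A n u) = ker \<alpha> \<omega> \<gamma>1 \<rho>1 (s - u)"
      unfolding A_def a_def by (rule sums_unique[symmetric], rule kterm_sums) (use True \<alpha> g1 in auto)
    moreover have "(\<Sum>n. B n u) = ker \<alpha> \<omega> \<gamma>2 \<rho>2 u"
      unfolding B_def b_def by (rule sums_unique[symmetric], rule kterm_sums) (use True \<alpha> g2 in auto)
    ultimately show ?thesis using True by (simp add: F_def)
  next
    case False
    thus ?thesis by (simp add: F_def)
  qed

    have ABeq: "indicator {0..s} u *\<^sub>R (A n u * B j u) = (a n * b j * \<omega> ^ (n + j)) *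
      (indicator {0..s} u *\<^sub>R (cp (s - u) powr (P n - 1) * cp u powr (Q j - 1)))" for n j u
    by (simp add: A_def B_def P_def Q_def power_add mult_ac)
  have ABint: "integrable lborel (\<lambda>u. indicator {0..s} u *\<^sub>R (A n u * B j u))" for n j
    unfolding ABeq by (intro integrable_mult_right cbeta_full(1) PQ s)
  have ABval: "(\<integral>u. indicator {0..s} u *\<^sub>R (A n u * B j u) \<partial>lborel)
      = (a n * b j * \<omega> ^ (n + j)) * (Beta (P n) (Q j) * cp s powr (P n + Q j - 1))" for n j
    unfolding ABeq by (subst integral_mult_right_zero) (use cbeta_full(2)[OF PQ(1) PQ(2) s] in simp)
  have Fsum: "F N u = (\<Sum>n\<le>N. indicator {0..s} u *\<^sub>R (A n u * B (N - n) u))" for N u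
    by (simp add: F_def scaleR_sum_right)
  have Fint: "integrable lborel (F N)" for N
    unfolding Fsum[abs_def] by (intro Bochner_Integration.integrable_sum ABint)
  have Fval: "(\<integral>u. F N u \<partial>lborel) = mlc \<alpha> (\<gamma>1 + \<gamma>2) (\<rho>1 + \<rho>2) N * \<omega> ^ N * cp s powr (\<alpha> * of_nat N + (\<gamma>1 + \<gamma>2) - 1)" for N
  proof -
    have "(\<integral>u. F N u \<partial>lborel) = (\<Sum>n\<le>N. (a n * b (N - n) * \<omega> ^ (n + (N - n))) * (Beta (P n) (Q (N - n)) * cp s powr (P n + Q (N - n) - 1)))"
      unfolding Fsum by (subst Bochner_Integration.integral_sum) (auto intro: ABint simp: ABval)
    also have "\<dots> = (\<Sum>n\<le>N. (pochhammer \<rho>1 n * pochhammer \<rho>2 (N - n) / (fact n * fact (N - n))) *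
          (rGamma (\<alpha> * of_nat N + (\<gamma>1 + \<gamma>2)) * \<omega> ^ N * cp s powr (\<alpha> * of_nat N + (\<gamma>1 + \<gamma>2) - 1)))"
    proof (intro sum.cong refl)
      fix n assume n: "n \<in> {..N}"
      have e1: "n + (N - n) = N" using n by auto
      have e2: "P n + Q (N - n) - 1 = \<alpha> * of_nat N + (\<gamma>1 + \<gamma>2) - 1"
        using n by (simp add: P_def Q_def of_nat_diff algebra_simps)
      have e3: "a n * b (N - n) * Beta (P n) (Q (N - n)) = pochhammer \<rho>1 n * pochhammer \<rho>2 (N - n) / (fact n * fact (N - n))
           * rGamma (\<alpha> * of_nat N + (\<gamma>1 + \<gamma>2))"
        unfolding a_def b_def P_def Q_def using mlc_Beta[OF \<alpha> g1 g2, of \<rho>1 n \<rho>2 "N - n"] e1 by simp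
      show "(a n * b (N - n) * \<omega> ^ (n + (N - n))) * (Beta (P n) (Q (N - n)) * cp s powr (P n + Q (N - n) - 1))
          = (pochhammer \<rho>1 n * pochhammer \<rho>2 (N - n) / (fact n * fact (N - n))) *
          (rGamma (\<alpha> * of_nat N + (\<gamma>1 + \<gamma>2)) * \<omega> ^ N * cp s powr (\<alpha> * of_nat N + (\<gamma>1 + \<gamma>2) - 1))"
      proof -
        define X where "X = cp s powr (\<alpha> * of_nat N + (\<gamma>1 + \<gamma>2) - 1)"
        have "(a n * b (N - n) * \<omega> ^ N) * (Beta (P n) (Q (N - n)) * X)
            = (a n * b (N - n) * Beta (P n) (Q (N - n))) * (\<omega> ^ N * X)" by (simp only: mult_ac)
        also have "\<dots> = (pochhammer \<rho>1 n * pochhammer \<rho>2 (N - n) / (fact n * fact (N - n))) *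
          (rGamma (\<alpha> * of_nat N + (\<gamma>1 + \<gamma>2)) * \<omega> ^ N * X)" unfolding e3 by (simp only: mult_ac)
        finally show ?thesis unfolding e1 e2 X_def .
      qed
    qed
    also have "\<dots> = (\<Sum>n\<le>N. pochhammer \<rho>1 n * pochhammer \<rho>2 (N - n) / (fact n * fact (N - n))) *
          (rGamma (\<alpha> * of_nat N + (\<gamma>1 + \<gamma>2)) * \<omega> ^ N * cp s powr (\<alpha> * of_nat N + (\<gamma>1 + \<gamma>2) - 1))"
      by (simp add: sum_distrib_right)
    also have "\<dots> = mlc \<alpha> (\<gamma>1 + \<gamma>2) (\<rho>1 + \<rho>2) N * \<omega> ^ N * cp s powr (\<alpha> * of_nat N + (\<gamma>1 + \<gamma>2) - 1)"
      unfolding vandermonde_fact by (simp add: mlc_def mult_ac)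
    finally show ?thesis .
  qed

    define r where "r = norm \<omega> * s powr Re \<alpha>"
  have r: "r \<ge> 0" by (simp add: r_def)
  define C where "C = Beta (Re \<gamma>1) (Re \<gamma>2) * s powr (Re \<gamma>1 + Re \<gamma>2 - 1)"
  have C: "C \<ge> 0" using Beta_real_pos[OF g1 g2] by (simp add: C_def)
  define h where "h n j u = indicator {0..s} u * (norm (a n) * norm (b j) * norm \<omega> ^ (n + j)) *
       ((s - u) powr (Re (P n) - 1) * u powr (Re (Q j) - 1))" for n j u
  have hnorm: "norm (indicator {0..s} u *\<^sub>R (A n u * B j u)) = h n j u" for n j u
    unfolding ABeq h_def
    by (cases "u \<in> {0..s}") (simp_all add: norm_mult norm_power)
  have hint: "integrable lborel (h n j)" and hval: "(\<integral>u. h n j u \<partial>lborel) \<le> C * ((norm (a n) * r ^ n) * (norm (b j) * r ^ j))" for n j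
  proof -
    have heq: "h n j u = (norm (a n) * norm (b j) * norm \<omega> ^ (n + j)) *
        (indicator {0..s} u * ((s - u) powr (Re (P n) - 1) * u powr (Re (Q j) - 1)))" for u
      by (simp add: h_def mult_ac)
    show "integrable lborel (h n j)" unfolding heq[abs_def]
      by (intro integrable_mult_right rbeta_full(1) PQ s)
    have "(\<integral>u. h n j u \<partial>lborel) = (norm (a n) * norm (b j) * norm \<omega> ^ (n + j)) *
        (Beta (Re (P n)) (Re (Q j)) * s powr (Re (P n) + Re (Q j) - 1))"
      unfolding heq by (subst integral_mult_right_zero) (simp add: rbeta_full(2)[OF PQ(1) PQ(2) s])
    also have "\<dots> \<le> (norm (a n) * norm (b j) * norm \<omega> ^ (n + j)) *
        (Beta (Re \<gamma>1) (Re \<gamma>2) * s powr (Re (P n) + Re (Q j) - 1))"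
      using \<alpha> g1 g2 by (intro mult_left_mono mult_right_mono Beta_real_mono) (auto simp: ReP ReQ)
    also have "s powr (Re (P n) + Re (Q j) - 1) = (s powr Re \<alpha>) ^ (n + j) * s powr (Re \<gamma>1 + Re \<gamma>2 - 1)"
    proof -
      have "s powr (Re (P n) + Re (Q j) - 1) = s powr (real (n + j) * Re \<alpha>) * s powr (Re \<gamma>1 + Re \<gamma>2 - 1)"
        by (simp add: ReP ReQ powr_add[symmetric] algebra_simps)
      also have "s powr (real (n + j) * Re \<alpha>) = (s powr Re \<alpha>) ^ (n + j)"
        using s powr_realpow[of "s powr Re \<alpha>" "n + j"] by (simp add: powr_powr[symmetric] mult.commute)
      finally show ?thesis .
    qed
    also have "(norm (a n) * norm (b j) * norm \<omega> ^ (n + j)) *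
        (Beta (Re \<gamma>1) (Re \<gamma>2) * ((s powr Re \<alpha>) ^ (n + j) * s powr (Re \<gamma>1 + Re \<gamma>2 - 1)))
        = C * ((norm (a n) * r ^ n) * (norm (b j) * r ^ j))"
      by (simp add: C_def r_def power_add power_mult_distrib mult_ac)
    finally show "(\<integral>u. h n j u \<partial>lborel) \<le> C * ((norm (a n) * r ^ n) * (norm (b j) * r ^ j))" .
  qed
  have sa: "summable (\<lambda>n. norm (norm (a n) * r ^ n))"
    using mlc_summable[OF \<alpha> g1 r, of \<rho>1] r by (simp add: a_def abs_mult)
  have sb: "summable (\<lambda>n. norm (norm (b n) * r ^ n))"
    using mlc_summable[OF \<alpha> g2 r, of \<rho>2] r by (simp add: b_def abs_mult)
  define g where "g N = C * (\<Sum>n\<le>N. (norm (a n) * r ^ n) * (norm (b (N - n)) * r ^ (N - n)))" for N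
  have gsum: "summable g" unfolding g_def by (intro summable_mult summable_Cauchy_product sa sb)
  have Fnorm: "(\<integral>u. norm (F N u) \<partial>lborel) \<le> g N" for N
  proof -
    have "(\<integral>u. norm (F N u) \<partial>lborel) \<le> (\<integral>u. (\<Sum>n\<le>N. h n (N - n) u) \<partial>lborel)"
    proof (rule integral_mono)
      show "integrable lborel (\<lambda>u. norm (F N u))" by (intro integrable_norm Fint)
      show "integrable lborel (\<lambda>u. \<Sum>n\<le>N. h n (N - n) u)" by (intro Bochner_Integration.integrable_sum hint)
      fix u
      have "norm (F N u) \<le> (\<Sum>n\<le>N. norm (indicator {0..s} u *\<^sub>R (A n u * B (N - n) u)))"
        unfolding Fsum by (rule norm_sum)
      thus "norm (F N u) \<le> (\<Sum>n\<le>N. h n (N - n) u)" unfolding hnorm .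
    qed
    also have "\<dots> = (\<Sum>n\<le>N. (\<integral>u. h n (N - n) u \<partial>lborel))"
      by (intro Bochner_Integration.integral_sum hint)
    also have "\<dots> \<le> (\<Sum>n\<le>N. C * ((norm (a n) * r ^ n) * (norm (b (N - n)) * r ^ (N - n))))"
      by (intro sum_mono hval)
    also have "\<dots> = g N" by (simp add: g_def sum_distrib_left)
    finally show ?thesis .
  qed
  have sumint: "summable (\<lambda>N. (\<integral>u. norm (F N u) \<partial>lborel))"
  proof (rule summable_comparison_test[OF _ gsum])
    show "\<exists>N0. \<forall>N\<ge>N0. norm (\<integral>u. norm (F N u) \<partial>lborel) \<le> g N"
      using Fnorm by (auto intro!: exI[of _ 0])
  qed
  have AEsum: "AE u in lborel. summable (\<lambda>N. norm (F N u))"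
  proof (intro AE_I2)
    fix u
    show "summable (\<lambda>N. norm (F N u))"
    proof (cases "u \<in> {0..s}")
      case True
      have sA: "summable (\<lambda>n. norm (norm (A n u)))" unfolding A_def a_def
        using kterm_summable[OF \<alpha> g1, of "s - u" \<rho>1 \<omega>] True by simp
      have sB: "summable (\<lambda>n. norm (norm (B n u)))" unfolding B_def b_def
        using kterm_summable[OF \<alpha> g2, of u \<rho>2 \<omega>] True by simp
      have "summable (\<lambda>N. \<Sum>n\<le>N. norm (A n u) * norm (B (N - n) u))"
        by (rule summable_Cauchy_product[OF sA sB])
      moreover have "norm (norm (F N u)) \<le> (\<Sum>n\<le>N. norm (A n u) * norm (B (N - n) u))" for N
      proof -
        have "norm (F N u) \<le> (\<Sum>n\<le>N. norm (A n u * B (N - n) u))"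
          unfolding F_def using True by (simp add: norm_sum)
        thus ?thesis by (simp add: norm_mult)
      qed
      ultimately show ?thesis by (rule summable_comparison_test'[where N=0])
    next
      case False
      thus ?thesis by (simp add: F_def)
    qed
  qed
  have [measurable]: "F N \<in> borel_measurable lborel" for N
    using Fint by (rule borel_measurable_integrable)
  have I1: "integrable lborel (\<lambda>u. \<Sum>N. F N u)"
    by (rule integrable_suminf[OF Fint AEsum sumint])
  have I2: "(\<integral>u. (\<Sum>N. F N u) \<partial>lborel) = (\<Sum>N. (\<integral>u. F N u \<partial>lborel))"
    by (rule integral_suminf[OF Fint AEsum sumint])
  have Feq: "(\<lambda>u. \<Sum>N. F N u) = (\<lambda>u. indicator {0..s} u *\<^sub>R (ker \<alpha> \<omega> \<gamma>1 \<rho>1 (s - u) * ker \<alpha> \<omega> \<gamma>2 \<rho>2 u))"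
    by (rule ext, rule sums_unique[symmetric, OF Fsums])
  show "integrable lborel (\<lambda>u. indicator {0..s} u *\<^sub>R (ker \<alpha> \<omega> \<gamma>1 \<rho>1 (s - u) * ker \<alpha> \<omega> \<gamma>2 \<rho>2 u))"
    using I1 unfolding Feq .
  have "(\<Sum>N. (\<integral>u. F N u \<partial>lborel)) = ker \<alpha> \<omega> (\<gamma>1 + \<gamma>2) (\<rho>1 + \<rho>2) s"
    unfolding Fval
    by (rule sums_unique[symmetric], rule kterm_sums) (use \<alpha> g1 g2 s in auto)
  thus "(\<integral>u. indicator {0..s} u *\<^sub>R (ker \<alpha> \<omega> \<gamma>1 \<rho>1 (s - u) * ker \<alpha> \<omega> \<gamma>2 \<rho>2 u) \<partial>lborel)
           = ker \<alpha> \<omega> (\<gamma>1 + \<gamma>2) (\<rho>1 + \<rho>2) s"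
    using I2 unfolding Feq by simp
qed


lemma nn_shift:
  fixes u :: real
  assumes "f \<in> borel_measurable borel"
  shows "(\<integral>\<^sup>+x. f x \<partial>lborel) = (\<integral>\<^sup>+x. f (u + x) \<partial>lborel)"
  using nn_integral_real_affine[OF assms, of 1 u] by simp

lemma nn_powr_interval:
  fixes r u d :: real assumes r: "r > 0" and ud: "u \<le> d"
  shows "(\<integral>\<^sup>+x. ennreal (indicator {u..d} x * (x - u) powr (r - 1)) \<partial>lborel) = ennreal ((d - u) powr r / r)"
proof -
  have "(\<integral>\<^sup>+x. ennreal (indicator {u..d} x * (x - u) powr (r - 1)) \<partial>lborel)
      = (\<integral>\<^sup>+x. ennreal (indicator {u..d} (u + x) * ((u + x) - u) powr (r - 1)) \<partial>lborel)"
    by (rule nn_shift) measurable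
  also have "\<dots> = (\<integral>\<^sup>+x. ennreal (indicator {0..d - u} x * x powr (r - 1)) \<partial>lborel)"
    by (intro nn_integral_cong) (auto simp: indicator_def)
  also have "\<dots> = ennreal ((d - u) powr (r - 1 + 1) / (r - 1 + 1))"
    by (rule nn_integral_has_integral_lebesgue[OF _ has_integral_powr_from_0]) (use r ud in auto)
  finally show ?thesis by simp
qed

lemma nn_beta_shift:
  fixes r1 r2 u x :: real assumes r1: "r1 > 0" and r2: "r2 > 0" and ux: "u \<le> x"
  shows "(\<integral>\<^sup>+t. ennreal (indicator {u..x} t * ((x - t) powr (r1 - 1) * (t - u) powr (r2 - 1))) \<partial>lborel)
     = ennreal (Beta r1 r2 * (x - u) powr (r1 + r2 - 1))"
proof (cases "u = x")
  case True
  then have "(\<lambda>t. ennreal (indicator {u..x} t * ((x - t) powr (r1 - 1) * (t - u) powr (r2 - 1)))) = (\<lambda>t. 0)"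
    by (auto simp: indicator_def fun_eq_iff)
  with True show ?thesis by simp
next
  case False
  with ux have s: "x - u > 0" by simp
  have "(\<integral>\<^sup>+t. ennreal (indicator {u..x} t * ((x - t) powr (r1 - 1) * (t - u) powr (r2 - 1))) \<partial>lborel)
      = (\<integral>\<^sup>+v. ennreal (indicator {u..x} (u + v) * ((x - (u + v)) powr (r1 - 1) * ((u + v) - u) powr (r2 - 1))) \<partial>lborel)"
    by (rule nn_shift) measurable
  also have "\<dots> = (\<integral>\<^sup>+v. ennreal (indicator {0..x - u} v * ((x - u) - v) powr (r1 - 1) * v powr (r2 - 1)) \<partial>lborel)"
    by (intro nn_integral_cong) (auto simp: indicator_def algebra_simps)
  also have "\<dots> = ennreal (Beta r1 r2 * (x - u) powr (r1 + r2 - 1))"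
    by (rule nn_beta_scaled[OF r1 r2 s])
  finally show ?thesis .
qed

definition Eop :: "complex \<Rightarrow> complex \<Rightarrow> real \<Rightarrow> complex \<Rightarrow> complex \<Rightarrow> (real \<Rightarrow> complex) \<Rightarrow> real \<Rightarrow> complex" where
  "Eop \<alpha> \<omega> c \<gamma> \<rho> h x = (\<integral>t. indicator {c..x} t *\<^sub>R (ker \<alpha> \<omega> \<gamma> \<rho> (x - t) * h t) \<partial>lborel)"

lemma prab_int_Eop: "prab_int \<alpha> \<gamma> \<omega> \<rho> c h x = Eop \<alpha> \<omega> c \<gamma> \<rho> h x"
  unfolding prab_int_def Eop_def set_lebesgue_integral_def
proof (intro Bochner_Integration.integral_cong refl)
  fix t
  show "indicator {c..x} t *\<^sub>R (cp (x - t) powr (\<gamma> - 1) * prab_ML \<alpha> \<gamma> \<rho> (\<omega> * cp (x - t) powr \<alpha>) * h t) =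
        indicator {c..x} t *\<^sub>R (ker \<alpha> \<omega> \<gamma> \<rho> (x - t) * h t)"
  proof (cases "t \<in> {c..x}")
    case True
    then consider "x - t > 0" | "x - t = 0" by fastforce
    thus ?thesis by cases (auto simp: ker_def)
  qed simp
qed

lemma Eop_cong: "(\<And>t. t \<in> {c..x} \<Longrightarrow> h1 t = h2 t) \<Longrightarrow> Eop \<alpha> \<omega> c \<gamma> \<rho> h1 x = Eop \<alpha> \<omega> c \<gamma> \<rho> h2 x"
  unfolding Eop_def by (intro Bochner_Integration.integral_cong refl) (auto simp: indicator_def)

lemma Eop_measurable[measurable]:
  assumes "Re \<alpha> > 0" "Re \<gamma> > 0" and hm: "h \<in> borel_measurable borel"
  shows "Eop \<alpha> \<omega> c \<gamma> \<rho> h \<in> borel_measurable borel"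
proof -
  have [measurable]: "ker \<alpha> \<omega> \<gamma> \<rho> \<in> borel_measurable borel" using ker_measurable[OF assms(1,2)] .
  have [measurable]: "h \<in> borel_measurable lborel" using hm by simp
  have [measurable]: "h \<in> borel_measurable borel" using hm by simp
  have eq: "Eop \<alpha> \<omega> c \<gamma> \<rho> h = (\<lambda>x. \<integral>t. (if c \<le> t \<and> t \<le> x then ker \<alpha> \<omega> \<gamma> \<rho> (x - t) * h t else 0) \<partial>lborel)"
    unfolding Eop_def by (intro ext Bochner_Integration.integral_cong) (auto simp: indicator_def)
  show ?thesis unfolding eq by measurable
qed


lemma pred_Icc_snd[measurable]: "Measurable.pred (borel \<Otimes>\<^sub>M borel) (\<lambda>x::real\<times>real. snd x \<in> {c..fst x})"
  unfolding atLeastAtMost_iff by measurable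
lemma pred_Icc_fst[measurable]: "Measurable.pred (borel \<Otimes>\<^sub>M borel) (\<lambda>x::real\<times>real. fst x \<in> {snd x..c})"
  unfolding atLeastAtMost_iff by measurable
lemma pred_Icc_fst2[measurable]: "Measurable.pred (borel \<Otimes>\<^sub>M borel) (\<lambda>x::real\<times>real. fst x \<in> {c..snd x})"
  unfolding atLeastAtMost_iff by measurable
lemma pred_Icc_snd2[measurable]: "Measurable.pred (borel \<Otimes>\<^sub>M borel) (\<lambda>x::real\<times>real. snd x \<in> {fst x..c})"
  unfolding atLeastAtMost_iff by measurable

lemma Phi_bound:
  fixes K1 K2 h :: "real \<Rightarrow> complex"
  assumes K1: "K1 \<in> borel_measurable borel" and K2: "K2 \<in> borel_measurable borel" and hm: "h \<in> borel_measurable borel"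
    and b1: "\<And>s. 0 < s \<Longrightarrow> s \<le> R \<Longrightarrow> norm (K1 s) \<le> M1 * s powr (r1 - 1)"
    and b2: "\<And>s. 0 < s \<Longrightarrow> s \<le> R \<Longrightarrow> norm (K2 s) \<le> M2 * s powr (r2 - 1)"
    and z1: "K1 0 = 0" and z2: "K2 0 = 0"
    and M: "M1 \<ge> 0" "M2 \<ge> 0" and r: "r1 > 0" "r2 > 0"
    and xR: "x - c \<le> R"
  shows "(\<integral>\<^sup>+t. \<integral>\<^sup>+u. ennreal (indicator {c..x} t * indicator {c..t} u * (norm (K1 (x - t)) * norm (K2 (t - u)) * norm (h u))) \<partial>lborel \<partial>lborel)
     \<le> ennreal (M1 * M2 * Beta r1 r2) * (\<integral>\<^sup>+u. ennreal (indicator {c..x} u * norm (h u) * (x - u) powr (r1 + r2 - 1)) \<partial>lborel)"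
proof -
  have [measurable]: "K1 \<in> borel_measurable lborel" "K2 \<in> borel_measurable lborel" "h \<in> borel_measurable lborel"
    "K1 \<in> borel_measurable borel" "K2 \<in> borel_measurable borel" "h \<in> borel_measurable borel"
    using K1 K2 hm by simp_all
  have "(\<integral>\<^sup>+t. \<integral>\<^sup>+u. ennreal (indicator {c..x} t * indicator {c..t} u * (norm (K1 (x - t)) * norm (K2 (t - u)) * norm (h u))) \<partial>lborel \<partial>lborel)
      = (\<integral>\<^sup>+u. \<integral>\<^sup>+t. ennreal (indicator {c..x} t * indicator {c..t} u * (norm (K1 (x - t)) * norm (K2 (t - u)) * norm (h u))) \<partial>lborel \<partial>lborel)"
    by (rule lborel_pair.Fubini'[symmetric]) measurable
  also have "\<dots> \<le> (\<integral>\<^sup>+u. ennreal (M1 * M2 * Beta r1 r2) * ennreal (indicator {c..x} u * norm (h u) * (x - u) powr (r1 + r2 - 1)) \<partial>lborel)"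
  proof (intro nn_integral_mono)
    fix u :: real
    show "(\<integral>\<^sup>+t. ennreal (indicator {c..x} t * indicator {c..t} u * (norm (K1 (x - t)) * norm (K2 (t - u)) * norm (h u))) \<partial>lborel)
        \<le> ennreal (M1 * M2 * Beta r1 r2) * ennreal (indicator {c..x} u * norm (h u) * (x - u) powr (r1 + r2 - 1))"
    proof (cases "u \<in> {c..x}")
      case False
      then have "(\<lambda>t. ennreal (indicator {c..x} t * indicator {c..t} u * (norm (K1 (x - t)) * norm (K2 (t - u)) * norm (h u)))) = (\<lambda>t. 0)"
        by (auto simp: indicator_def fun_eq_iff)
      thus ?thesis by simp
    next
      case True
      have "(\<integral>\<^sup>+t. ennreal (indicator {c..x} t * indicator {c..t} u * (norm (K1 (x - t)) * norm (K2 (t - u)) * norm (h u))) \<partial>lborel)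
          \<le> (\<integral>\<^sup>+t. ennreal (M1 * M2 * norm (h u)) * ennreal (indicator {u..x} t * ((x - t) powr (r1 - 1) * (t - u) powr (r2 - 1))) \<partial>lborel)"
      proof (intro nn_integral_mono)
        fix t :: real
        show "ennreal (indicator {c..x} t * indicator {c..t} u * (norm (K1 (x - t)) * norm (K2 (t - u)) * norm (h u)))
            \<le> ennreal (M1 * M2 * norm (h u)) * ennreal (indicator {u..x} t * ((x - t) powr (r1 - 1) * (t - u) powr (r2 - 1)))"
        proof (cases "t \<in> {u<..<x}")
          case True2: True
          have "norm (K1 (x - t)) * norm (K2 (t - u)) \<le> (M1 * (x - t) powr (r1 - 1)) * (M2 * (t - u) powr (r2 - 1))"
            using True True2 xR M by (intro mult_mono b1 b2) auto
          hence "norm (K1 (x - t)) * norm (K2 (t - u)) * norm (h u) \<le> (M1 * (x - t) powr (r1 - 1)) * (M2 * (t - u) powr (r2 - 1)) * norm (h u)"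
            by (rule mult_right_mono) simp
          thus ?thesis using True True2 M
            by (simp add: indicator_def ennreal_mult'[symmetric] mult_ac)
        next
          case False2: False
          then consider "t = u" | "t = x" | "t \<notin> {u..x}" by fastforce
          thus ?thesis
          proof cases
            case 1 thus ?thesis using z2 by simp
          next
            case 2 thus ?thesis using z1 by simp
          next
            case 3 thus ?thesis using True by (auto simp: indicator_def)
          qed
        qed
      qed
      also have "\<dots> = ennreal (M1 * M2 * norm (h u)) * ennreal (Beta r1 r2 * (x - u) powr (r1 + r2 - 1))"
        using True by (subst nn_integral_cmult) (auto simp: nn_beta_shift[OF r])
      also have "\<dots> = ennreal (M1 * M2 * Beta r1 r2) * ennreal (indicator {c..x} u * norm (h u) * (x - u) powr (r1 + r2 - 1))"
        using True M Beta_real_pos[OF r]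
        by (simp add: ennreal_mult'[symmetric] mult_ac)
      finally show ?thesis .
    qed
  qed
  also have "\<dots> = ennreal (M1 * M2 * Beta r1 r2) * (\<integral>\<^sup>+u. ennreal (indicator {c..x} u * norm (h u) * (x - u) powr (r1 + r2 - 1)) \<partial>lborel)"
    by (rule nn_integral_cmult) measurable
  finally show ?thesis .
qed

lemma Young:
  fixes h :: "real \<Rightarrow> complex"
  assumes hm: "h \<in> borel_measurable borel" and r: "r > 0" and cd: "c \<le> d"
  shows "(\<integral>\<^sup>+x. \<integral>\<^sup>+u. ennreal (indicator {c..d} x * (indicator {c..x} u * norm (h u) * (x - u) powr (r - 1))) \<partial>lborel \<partial>lborel)
     \<le> ennreal ((d - c) powr r / r) * (\<integral>\<^sup>+u. ennreal (indicator {c..d} u * norm (h u)) \<partial>lborel)"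
proof -
  have [measurable]: "h \<in> borel_measurable lborel" "h \<in> borel_measurable borel" using hm by simp_all
  have "(\<integral>\<^sup>+x. \<integral>\<^sup>+u. ennreal (indicator {c..d} x * (indicator {c..x} u * norm (h u) * (x - u) powr (r - 1))) \<partial>lborel \<partial>lborel)
      = (\<integral>\<^sup>+u. \<integral>\<^sup>+x. ennreal (indicator {c..d} x * (indicator {c..x} u * norm (h u) * (x - u) powr (r - 1))) \<partial>lborel \<partial>lborel)"
    by (rule lborel_pair.Fubini'[symmetric]) measurable
  also have "\<dots> \<le> (\<integral>\<^sup>+u. ennreal ((d - c) powr r / r) * ennreal (indicator {c..d} u * norm (h u)) \<partial>lborel)"
  proof (intro nn_integral_mono)
    fix u :: real
    show "(\<integral>\<^sup>+x. ennreal (indicator {c..d} x * (indicator {c..x} u * norm (h u) * (x - u) powr (r - 1))) \<partial>lborel)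
       \<le> ennreal ((d - c) powr r / r) * ennreal (indicator {c..d} u * norm (h u))"
    proof (cases "u \<in> {c..d}")
      case False
      then have "(\<lambda>x. ennreal (indicator {c..d} x * (indicator {c..x} u * norm (h u) * (x - u) powr (r - 1)))) = (\<lambda>x. 0)"
        by (auto simp: indicator_def fun_eq_iff)
      thus ?thesis by simp
    next
      case True
      have "(\<integral>\<^sup>+x. ennreal (indicator {c..d} x * (indicator {c..x} u * norm (h u) * (x - u) powr (r - 1))) \<partial>lborel)
          = (\<integral>\<^sup>+x. ennreal (norm (h u)) * ennreal (indicator {u..d} x * (x - u) powr (r - 1)) \<partial>lborel)"
        using True by (intro nn_integral_cong) (auto simp: indicator_def ennreal_mult'[symmetric])
      also have "\<dots> = ennreal (norm (h u)) * ennreal ((d - u) powr r / r)"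
        using True by (subst nn_integral_cmult) (auto simp: nn_powr_interval[OF r])
      also have "\<dots> \<le> ennreal (norm (h u)) * ennreal ((d - c) powr r / r)"
        using True r by (intro mult_left_mono ennreal_leI divide_right_mono powr_mono2) auto
      also have "\<dots> = ennreal ((d - c) powr r / r) * ennreal (indicator {c..d} u * norm (h u))"
        using True by (simp add: mult.commute)
      finally show ?thesis .
    qed
  qed
  also have "\<dots> = ennreal ((d - c) powr r / r) * (\<integral>\<^sup>+u. ennreal (indicator {c..d} u * norm (h u)) \<partial>lborel)"
    by (rule nn_integral_cmult) measurable
  finally show ?thesis .
qed


lemma int_shift:
  fixes f :: "real \<Rightarrow> complex" and u :: real
  shows "(\<integral>x. f x \<partial>lborel) = (\<integral>x. f (u + x) \<partial>lborel)"
  using lborel_integral_real_affine[of 1 f u] by simp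

lemma semigroup_point:
  fixes K1 K2 K12 h :: "real \<Rightarrow> complex"
  assumes K1: "K1 \<in> borel_measurable borel" and K2: "K2 \<in> borel_measurable borel" and hm: "h \<in> borel_measurable borel"
    and z1: "K1 0 = 0" and z2: "K2 0 = 0" and z12: "K12 0 = 0"
    and conv: "\<And>s. s > 0 \<Longrightarrow> (\<integral>v. indicator {0..s} v *\<^sub>R (K1 (s - v) * K2 v) \<partial>lborel) = K12 s"
    and fin: "(\<integral>\<^sup>+t. \<integral>\<^sup>+u. ennreal (indicator {c..x} t * indicator {c..t} u * (norm (K1 (x - t)) * norm (K2 (t - u)) * norm (h u))) \<partial>lborel \<partial>lborel) < \<infinity>"
  shows "(\<integral>t. indicator {c..x} t *\<^sub>R (K1 (x - t) * (\<integral>u. indicator {c..t} u *\<^sub>R (K2 (t - u) * h u) \<partial>lborel)) \<partial>lborel)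
       = (\<integral>u. indicator {c..x} u *\<^sub>R (K12 (x - u) * h u) \<partial>lborel)"
proof -
  have [measurable]: "K1 \<in> borel_measurable lborel" "K2 \<in> borel_measurable lborel" "h \<in> borel_measurable lborel"
    "K1 \<in> borel_measurable borel" "K2 \<in> borel_measurable borel" "h \<in> borel_measurable borel"
    using K1 K2 hm by simp_all
  define G where "G = (\<lambda>(t::real, u::real). (indicator {c..x} t *\<^sub>R K1 (x - t)) * (indicator {c..t} u *\<^sub>R (K2 (t - u) * h u)))"
  have Gm[measurable]: "G \<in> borel_measurable (lborel \<Otimes>\<^sub>M lborel)" unfolding G_def by measurable
  have Gnorm: "norm (G (t, u)) = indicator {c..x} t * indicator {c..t} u * (norm (K1 (x - t)) * norm (K2 (t - u)) * norm (h u))" for t u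
    by (simp add: G_def norm_mult indicator_def)
  have "(\<integral>\<^sup>+p. ennreal (norm (G p)) \<partial>(lborel \<Otimes>\<^sub>M lborel)) = (\<integral>\<^sup>+t. \<integral>\<^sup>+u. ennreal (norm (G (t, u))) \<partial>lborel \<partial>lborel)"
    by (rule lborel.nn_integral_fst[symmetric]) measurable
  also have "\<dots> < \<infinity>" unfolding Gnorm by (rule fin)
  finally have Gint: "integrable (lborel \<Otimes>\<^sub>M lborel) G" by (intro integrableI_bounded Gm)
  have "(\<integral>t. indicator {c..x} t *\<^sub>R (K1 (x - t) * (\<integral>u. indicator {c..t} u *\<^sub>R (K2 (t - u) * h u) \<partial>lborel)) \<partial>lborel)
      = (\<integral>t. (\<integral>u. G (t, u) \<partial>lborel) \<partial>lborel)"
  proof (intro Bochner_Integration.integral_cong refl)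
    fix t
    have "(\<integral>u. G (t, u) \<partial>lborel) = (indicator {c..x} t *\<^sub>R K1 (x - t)) * (\<integral>u. indicator {c..t} u *\<^sub>R (K2 (t - u) * h u) \<partial>lborel)"
      unfolding G_def case_prod_conv by (rule integral_mult_right_zero)
    thus "indicator {c..x} t *\<^sub>R (K1 (x - t) * (\<integral>u. indicator {c..t} u *\<^sub>R (K2 (t - u) * h u) \<partial>lborel)) = (\<integral>u. G (t, u) \<partial>lborel)"
      by (simp add: mult_scaleR_left)
  qed
  also have "\<dots> = (\<integral>u. (\<integral>t. G (t, u) \<partial>lborel) \<partial>lborel)"
    using lborel_pair.Fubini_integral[of "\<lambda>t u. G (t, u)"] Gint by simp
  also have "\<dots> = (\<integral>u. indicator {c..x} u *\<^sub>R (K12 (x - u) * h u) \<partial>lborel)"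
  proof (intro Bochner_Integration.integral_cong refl)
    fix u
    show "(\<integral>t. G (t, u) \<partial>lborel) = indicator {c..x} u *\<^sub>R (K12 (x - u) * h u)"
    proof (cases "u \<in> {c..x}")
      case False
      then have "(\<lambda>t. G (t, u)) = (\<lambda>t. 0)" by (auto simp: G_def indicator_def fun_eq_iff)
      with False show ?thesis by simp
    next
      case True
      have "(\<integral>t. G (t, u) \<partial>lborel) = (\<integral>t. h u * (indicator {u..x} t *\<^sub>R (K1 (x - t) * K2 (t - u))) \<partial>lborel)"
        using True by (intro Bochner_Integration.integral_cong refl) (auto simp: G_def indicator_def)
      also have "\<dots> = h u * (\<integral>t. indicator {u..x} t *\<^sub>R (K1 (x - t) * K2 (t - u)) \<partial>lborel)"
        by (rule integral_mult_right_zero)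
      also have "(\<integral>t. indicator {u..x} t *\<^sub>R (K1 (x - t) * K2 (t - u)) \<partial>lborel)
          = (\<integral>v. indicator {u..x} (u + v) *\<^sub>R (K1 (x - (u + v)) * K2 ((u + v) - u)) \<partial>lborel)"
        by (rule int_shift)
      also have "\<dots> = (\<integral>v. indicator {0..x - u} v *\<^sub>R (K1 ((x - u) - v) * K2 v) \<partial>lborel)"
        by (intro Bochner_Integration.integral_cong refl) (auto simp: indicator_def algebra_simps)
      also have "\<dots> = K12 (x - u)"
      proof (cases "x - u > 0")
        case True
        thus ?thesis by (rule conv)
      next
        case False
        with \<open>u \<in> {c..x}\<close> have "x - u = 0" by auto
        hence "(\<lambda>v. indicator {0..x - u} v *\<^sub>R (K1 ((x - u) - v) * K2 v)) = (\<lambda>v. 0)"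
          using z2 by (auto simp: indicator_def fun_eq_iff)
        thus ?thesis using \<open>x - u = 0\<close> z12 by simp
      qed
      finally show ?thesis using True by (simp add: mult.commute)
    qed
  qed
  finally show ?thesis .
qed


lemma pred3[measurable]: "Measurable.pred ((borel \<Otimes>\<^sub>M borel) \<Otimes>\<^sub>M borel) (\<lambda>x::(real\<times>real)\<times>real. snd x \<in> {c..snd (fst x)})"
  unfolding atLeastAtMost_iff by measurable

lemma set_integrable_nn_fin:
  fixes h :: "real \<Rightarrow> complex"
  assumes "set_integrable lborel {c..d} h"
  shows "(\<integral>\<^sup>+u. ennreal (indicator {c..d} u * norm (h u)) \<partial>lborel) < \<infinity>"
proof -
  have "integrable lborel (\<lambda>u. indicator {c..d} u *\<^sub>R h u)" using assms by (simp add: set_integrable_def)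
  hence "(\<integral>\<^sup>+u. ennreal (norm (indicator {c..d} u *\<^sub>R h u)) \<partial>lborel) < \<infinity>"
    by (simp add: integrable_iff_bounded)
  thus ?thesis by (simp add: indicator_def)
qed

lemma Eop_semigroup_AE:
  assumes \<alpha>: "Re \<alpha> > 0" and g1: "Re \<gamma>1 > 0" and g2: "Re \<gamma>2 > 0" and cd: "c \<le> d"
    and hm: "h \<in> borel_measurable borel"
    and hfin: "(\<integral>\<^sup>+u. ennreal (indicator {c..d} u * norm (h u)) \<partial>lborel) < \<infinity>"
  shows "AE x in lborel. x \<in> {c..d} \<longrightarrow>
     Eop \<alpha> \<omega> c \<gamma>1 \<rho>1 (Eop \<alpha> \<omega> c \<gamma>2 \<rho>2 h) x = Eop \<alpha> \<omega> c (\<gamma>1 + \<gamma>2) (\<rho>1 + \<rho>2) h x"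
proof -
  define K1 where "K1 = ker \<alpha> \<omega> \<gamma>1 \<rho>1"
  define K2 where "K2 = ker \<alpha> \<omega> \<gamma>2 \<rho>2"
  define K12 where "K12 = ker \<alpha> \<omega> (\<gamma>1 + \<gamma>2) (\<rho>1 + \<rho>2)"
  have [measurable]: "K1 \<in> borel_measurable borel" "K2 \<in> borel_measurable borel"
    "K1 \<in> borel_measurable lborel" "K2 \<in> borel_measurable lborel"
    "h \<in> borel_measurable lborel" "h \<in> borel_measurable borel"
    using ker_measurable[OF \<alpha> g1] ker_measurable[OF \<alpha> g2] hm by (simp_all add: K1_def K2_def)
  obtain M1 where M1: "M1 \<ge> 0" "\<And>s. 0 < s \<Longrightarrow> s \<le> d - c \<Longrightarrow> norm (K1 s) \<le> M1 * s powr (Re \<gamma>1 - 1)"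
    using ker_bound[OF \<alpha> g1, of "d - c" \<omega> \<rho>1] cd unfolding K1_def by auto
  obtain M2 where M2: "M2 \<ge> 0" "\<And>s. 0 < s \<Longrightarrow> s \<le> d - c \<Longrightarrow> norm (K2 s) \<le> M2 * s powr (Re \<gamma>2 - 1)"
    using ker_bound[OF \<alpha> g2, of "d - c" \<omega> \<rho>2] cd unfolding K2_def by auto
  define \<Phi> where "\<Phi> x = (\<integral>\<^sup>+t. \<integral>\<^sup>+u. ennreal (indicator {c..x} t * indicator {c..t} u * (norm (K1 (x - t)) * norm (K2 (t - u)) * norm (h u))) \<partial>lborel \<partial>lborel)" for x
  define B where "B = M1 * M2 * Beta (Re \<gamma>1) (Re \<gamma>2)"
  define r where "r = Re \<gamma>1 + Re \<gamma>2"
  have r: "r > 0" using g1 g2 by (simp add: r_def)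
  have \<Phi>m[measurable]: "(\<lambda>x. ennreal (indicator {c..d} x) * \<Phi> x) \<in> borel_measurable lborel"
    unfolding \<Phi>_def by measurable
  have "(\<integral>\<^sup>+x. ennreal (indicator {c..d} x) * \<Phi> x \<partial>lborel)
      \<le> (\<integral>\<^sup>+x. ennreal B * (\<integral>\<^sup>+u. ennreal (indicator {c..d} x * (indicator {c..x} u * norm (h u) * (x - u) powr (r - 1))) \<partial>lborel) \<partial>lborel)"
  proof (intro nn_integral_mono)
    fix x :: real
    show "ennreal (indicator {c..d} x) * \<Phi> x
       \<le> ennreal B * (\<integral>\<^sup>+u. ennreal (indicator {c..d} x * (indicator {c..x} u * norm (h u) * (x - u) powr (r - 1))) \<partial>lborel)"
    proof (cases "x \<in> {c..d}")
      case True
      have "\<Phi> x \<le> ennreal B * (\<integral>\<^sup>+u. ennreal (indicator {c..x} u * norm (h u) * (x - u) powr (Re \<gamma>1 + Re \<gamma>2 - 1)) \<partial>lborel)"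
        unfolding \<Phi>_def B_def
        by (rule Phi_bound[where R="d - c"]) (use M1 M2 g1 g2 True ker_measurable[OF \<alpha> g1, of \<omega> \<rho>1] ker_measurable[OF \<alpha> g2, of \<omega> \<rho>2] hm in \<open>auto simp: K1_def K2_def\<close>)
      thus ?thesis using True by (simp add: r_def)
    qed simp
  qed
  also have "\<dots> = ennreal B * (\<integral>\<^sup>+x. \<integral>\<^sup>+u. ennreal (indicator {c..d} x * (indicator {c..x} u * norm (h u) * (x - u) powr (r - 1))) \<partial>lborel \<partial>lborel)"
    by (rule nn_integral_cmult) measurable
  also have "\<dots> \<le> ennreal B * (ennreal ((d - c) powr r / r) * (\<integral>\<^sup>+u. ennreal (indicator {c..d} u * norm (h u)) \<partial>lborel))"
    by (intro mult_left_mono Young hm r cd) simp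
  also have "\<dots> < \<infinity>" using hfin by (simp add: ennreal_mult_less_top)
  finally have "(\<integral>\<^sup>+x. ennreal (indicator {c..d} x) * \<Phi> x \<partial>lborel) \<noteq> \<infinity>" by simp
  from nn_integral_PInf_AE[OF \<Phi>m this]
  show ?thesis
  proof (rule eventually_mono)
    fix x assume fx: "ennreal (indicator {c..d} x) * \<Phi> x \<noteq> \<infinity>"
    show "x \<in> {c..d} \<longrightarrow> Eop \<alpha> \<omega> c \<gamma>1 \<rho>1 (Eop \<alpha> \<omega> c \<gamma>2 \<rho>2 h) x = Eop \<alpha> \<omega> c (\<gamma>1 + \<gamma>2) (\<rho>1 + \<rho>2) h x"
    proof
      assume x: "x \<in> {c..d}"
      with fx have fin: "\<Phi> x < \<infinity>" by (simp add: top.not_eq_extremum)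
      have "(\<integral>t. indicator {c..x} t *\<^sub>R (K1 (x - t) * (\<integral>u. indicator {c..t} u *\<^sub>R (K2 (t - u) * h u) \<partial>lborel)) \<partial>lborel)
          = (\<integral>u. indicator {c..x} u *\<^sub>R (K12 (x - u) * h u) \<partial>lborel)"
      proof (rule semigroup_point)
        show "K12 0 = 0" "K1 0 = 0" "K2 0 = 0" by (simp_all add: K1_def K2_def K12_def)
        show "(\<integral>v. indicator {0..s} v *\<^sub>R (K1 (s - v) * K2 v) \<partial>lborel) = K12 s" if "s > 0" for s
          unfolding K1_def K2_def K12_def by (rule ker_conv(2)[OF \<alpha> g1 g2 that])
        show "(\<integral>\<^sup>+t. \<integral>\<^sup>+u. ennreal (indicator {c..x} t * indicator {c..t} u * (norm (K1 (x - t)) * norm (K2 (t - u)) * norm (h u))) \<partial>lborel \<partial>lborel) < \<infinity>"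
          using fin by (simp add: \<Phi>_def)
      qed measurable
      thus "Eop \<alpha> \<omega> c \<gamma>1 \<rho>1 (Eop \<alpha> \<omega> c \<gamma>2 \<rho>2 h) x = Eop \<alpha> \<omega> c (\<gamma>1 + \<gamma>2) (\<rho>1 + \<rho>2) h x"
        by (simp add: Eop_def K1_def K2_def K12_def)
    qed
  qed
qed


lemma norm_integral_le_nn:
  fixes f :: "_ \<Rightarrow> complex"
  shows "ennreal (norm (\<integral>x. f x \<partial>M)) \<le> (\<integral>\<^sup>+x. ennreal (norm (f x)) \<partial>M)"
proof (cases "integrable M f")
  case True thus ?thesis by (rule integral_norm_bound_ennreal)
next
  case False thus ?thesis by (simp add: not_integrable_integral_eq)
qed

lemma Eop_nn_fin:
  assumes \<alpha>: "Re \<alpha> > 0" and g: "Re \<gamma> > 0" and cd: "c \<le> d"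
    and hm: "h \<in> borel_measurable borel"
    and hfin: "(\<integral>\<^sup>+u. ennreal (indicator {c..d} u * norm (h u)) \<partial>lborel) < \<infinity>"
  shows "(\<integral>\<^sup>+x. ennreal (indicator {c..d} x * norm (Eop \<alpha> \<omega> c \<gamma> \<rho> h x)) \<partial>lborel) < \<infinity>"
proof -
  define K where "K = ker \<alpha> \<omega> \<gamma> \<rho>"
  have [measurable]: "K \<in> borel_measurable borel" "K \<in> borel_measurable lborel"
    "h \<in> borel_measurable lborel" "h \<in> borel_measurable borel"
    using ker_measurable[OF \<alpha> g] hm by (simp_all add: K_def)
  obtain M where M: "M \<ge> 0" "\<And>s. 0 < s \<Longrightarrow> s \<le> d - c \<Longrightarrow> norm (K s) \<le> M * s powr (Re \<gamma> - 1)"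
    using ker_bound[OF \<alpha> g, of "d - c" \<omega> \<rho>] cd unfolding K_def by auto
  have "(\<integral>\<^sup>+x. ennreal (indicator {c..d} x * norm (Eop \<alpha> \<omega> c \<gamma> \<rho> h x)) \<partial>lborel)
     \<le> (\<integral>\<^sup>+x. ennreal M * (\<integral>\<^sup>+u. ennreal (indicator {c..d} x * (indicator {c..x} u * norm (h u) * (x - u) powr (Re \<gamma> - 1))) \<partial>lborel) \<partial>lborel)"
  proof (intro nn_integral_mono)
    fix x :: real
    show "ennreal (indicator {c..d} x * norm (Eop \<alpha> \<omega> c \<gamma> \<rho> h x))
       \<le> ennreal M * (\<integral>\<^sup>+u. ennreal (indicator {c..d} x * (indicator {c..x} u * norm (h u) * (x - u) powr (Re \<gamma> - 1))) \<partial>lborel)"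
    proof (cases "x \<in> {c..d}")
      case True
      have "ennreal (norm (Eop \<alpha> \<omega> c \<gamma> \<rho> h x)) \<le> (\<integral>\<^sup>+u. ennreal (norm (indicator {c..x} u *\<^sub>R (K (x - u) * h u))) \<partial>lborel)"
        unfolding Eop_def K_def by (rule norm_integral_le_nn)
      also have "\<dots> \<le> (\<integral>\<^sup>+u. ennreal M * ennreal (indicator {c..x} u * norm (h u) * (x - u) powr (Re \<gamma> - 1)) \<partial>lborel)"
      proof (intro nn_integral_mono)
        fix u :: real
        show "ennreal (norm (indicator {c..x} u *\<^sub>R (K (x - u) * h u))) \<le> ennreal M * ennreal (indicator {c..x} u * norm (h u) * (x - u) powr (Re \<gamma> - 1))"
        proof (cases "u \<in> {c..<x}")
          case True2: True
          have "norm (K (x - u)) * norm (h u) \<le> M * (x - u) powr (Re \<gamma> - 1) * norm (h u)"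
            using True True2 by (intro mult_right_mono M(2)) auto
          thus ?thesis using True2 M by (simp add: indicator_def norm_mult ennreal_mult'[symmetric] mult_ac)
        next
          case False
          then consider "u = x" | "u \<notin> {c..x}" by fastforce
          thus ?thesis by cases (auto simp: K_def)
        qed
      qed
      also have "\<dots> = ennreal M * (\<integral>\<^sup>+u. ennreal (indicator {c..x} u * norm (h u) * (x - u) powr (Re \<gamma> - 1)) \<partial>lborel)"
        by (rule nn_integral_cmult) measurable
      finally show ?thesis using True by simp
    qed simp
  qed
  also have "\<dots> = ennreal M * (\<integral>\<^sup>+x. \<integral>\<^sup>+u. ennreal (indicator {c..d} x * (indicator {c..x} u * norm (h u) * (x - u) powr (Re \<gamma> - 1))) \<partial>lborel \<partial>lborel)"
    by (rule nn_integral_cmult) measurable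
  also have "\<dots> \<le> ennreal M * (ennreal ((d - c) powr Re \<gamma> / Re \<gamma>) * (\<integral>\<^sup>+u. ennreal (indicator {c..d} u * norm (h u)) \<partial>lborel))"
    by (intro mult_left_mono Young hm g cd) simp
  also have "\<dots> < \<infinity>" using hfin by (simp add: ennreal_mult_less_top)
  finally show ?thesis .
qed

lemma ker_one: "s > 0 \<Longrightarrow> ker \<alpha> \<omega> 1 0 s = 1"
proof -
  assume s: "s > 0"
  have "prab_ML \<alpha> 1 0 z = 1" for z
  proof -
    have "(\<lambda>n. mlc \<alpha> 1 0 n * z ^ n) = (\<lambda>n. if n = 0 then 1 else 0)"
      by (auto simp: mlc_def fun_eq_iff pochhammer_0_left)
    moreover have "(\<Sum>n. if n = 0 then 1 else 0) = (1::complex)"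
      using sums_single[of 0 "\<lambda>_. 1::complex"] by (simp add: sums_iff)
    ultimately show ?thesis unfolding prab_ML_alt by simp
  qed
  thus ?thesis using s by (simp add: ker_def)
qed

lemma Eop_one:
  assumes hm: "h \<in> borel_measurable borel"
  shows "Eop \<alpha> \<omega> c 1 0 h x = (\<integral>t. indicator {c..x} t *\<^sub>R h t \<partial>lborel)"
  unfolding Eop_def
proof (rule integral_cong_AE)
  have [measurable]: "h \<in> borel_measurable lborel" "h \<in> borel_measurable borel" using hm by simp_all
  have [measurable]: "ker \<alpha> \<omega> 1 0 \<in> borel_measurable borel"
  proof -
    have "ker \<alpha> \<omega> 1 0 = (\<lambda>s. if s > 0 then 1 else 0)" by (auto simp: fun_eq_iff ker_one)
    thus ?thesis by simp
  qed
  show "(\<lambda>t. indicator {c..x} t *\<^sub>R (ker \<alpha> \<omega> 1 0 (x - t) * h t)) \<in> borel_measurable lborel" by measurable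
  show "(\<lambda>t. indicator {c..x} t *\<^sub>R h t) \<in> borel_measurable lborel" by measurable
  show "AE t in lborel. indicator {c..x} t *\<^sub>R (ker \<alpha> \<omega> 1 0 (x - t) * h t) = indicator {c..x} t *\<^sub>R h t"
    using AE_lborel_singleton[of x] by eventually_elim (auto simp: indicator_def ker_one)
qed


lemma ibp:
  fixes H :: "real \<Rightarrow> complex" and \<psi> \<psi>' :: "real \<Rightarrow> real"
  assumes Hm: "H \<in> borel_measurable borel"
    and Hfin: "(\<integral>\<^sup>+u. ennreal (indicator {c..d} u * norm (H u)) \<partial>lborel) < \<infinity>" and cd: "c \<le> d"
    and der: "\<And>x. (\<psi> has_real_derivative \<psi>' x) (at x)" and cont: "continuous_on UNIV \<psi>'" and \<psi>d: "\<psi> d = 0"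
  shows "(\<integral>x. indicator {c..d} x *\<^sub>R ((\<integral>t. indicator {c..x} t *\<^sub>R H t \<partial>lborel) * cp (\<psi>' x)) \<partial>lborel)
       = - (\<integral>x. indicator {c..d} x *\<^sub>R (H x * cp (\<psi> x)) \<partial>lborel)"
proof -
  have contpsi: "continuous_on UNIV \<psi>"
    using der by (intro continuous_at_imp_continuous_on) (auto intro: DERIV_isCont)
  have [measurable]: "H \<in> borel_measurable lborel" "H \<in> borel_measurable borel"
    "\<psi>' \<in> borel_measurable borel" "\<psi>' \<in> borel_measurable lborel"
    "\<psi> \<in> borel_measurable borel" "\<psi> \<in> borel_measurable lborel"
    using Hm borel_measurable_continuous_onI[OF cont] borel_measurable_continuous_onI[OF contpsi] by simp_all
  have "bounded (\<psi>' ` {c..d})"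
    by (intro compact_imp_bounded compact_continuous_image continuous_on_subset[OF cont]) auto
  then obtain B0 where B0: "\<forall>x\<in>{c..d}. \<bar>\<psi>' x\<bar> \<le> B0" unfolding bounded_real by blast
  define B where "B = max B0 0"
  have B: "B \<ge> 0" "\<And>x. x \<in> {c..d} \<Longrightarrow> \<bar>\<psi>' x\<bar> \<le> B" using B0 by (auto simp: B_def intro: le_max_iff_disj[THEN iffD2])
  define G where "G = (\<lambda>(x::real, t::real). indicator {c..d} x *\<^sub>R (indicator {c..x} t *\<^sub>R H t * cp (\<psi>' x)))"
  have Gm[measurable]: "G \<in> borel_measurable (lborel \<Otimes>\<^sub>M lborel)" unfolding G_def by measurable
  have "(\<integral>\<^sup>+p. ennreal (norm (G p)) \<partial>(lborel \<Otimes>\<^sub>M lborel)) = (\<integral>\<^sup>+x. \<integral>\<^sup>+t. ennreal (norm (G (x, t))) \<partial>lborel \<partial>lborel)"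
    by (rule lborel.nn_integral_fst[symmetric]) measurable
  also have "\<dots> \<le> (\<integral>\<^sup>+x. \<integral>\<^sup>+t. ennreal (B * indicator {c..d} x) * ennreal (indicator {c..d} t * norm (H t)) \<partial>lborel \<partial>lborel)"
  proof (intro nn_integral_mono)
    fix x t :: real
    show "ennreal (norm (G (x, t))) \<le> ennreal (B * indicator {c..d} x) * ennreal (indicator {c..d} t * norm (H t))"
    proof (cases "x \<in> {c..d} \<and> t \<in> {c..x}")
      case True
      have "norm (H t) * \<bar>\<psi>' x\<bar> \<le> norm (H t) * B" using True B by (intro mult_left_mono) auto
      thus ?thesis using True B by (simp add: G_def norm_mult ennreal_mult'[symmetric] mult_ac)
    next
      case False thus ?thesis by (auto simp: G_def indicator_def)
    qed
  qed
  also have "\<dots> = (\<integral>\<^sup>+x. ennreal (B * indicator {c..d} x) * (\<integral>\<^sup>+t. ennreal (indicator {c..d} t * norm (H t)) \<partial>lborel) \<partial>lborel)"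
    by (intro nn_integral_cong nn_integral_cmult) measurable
  also have "\<dots> = (\<integral>\<^sup>+x. ennreal (B * indicator {c..d} x) \<partial>lborel) * (\<integral>\<^sup>+t. ennreal (indicator {c..d} t * norm (H t)) \<partial>lborel)"
    by (rule nn_integral_multc) measurable
  also have "(\<integral>\<^sup>+x. ennreal (B * indicator {c..d} x) \<partial>lborel) = ennreal B * ennreal (d - c)"
    using B cd by (simp add: ennreal_mult' ennreal_indicator nn_integral_cmult_indicator)
  also have "ennreal B * ennreal (d - c) * (\<integral>\<^sup>+t. ennreal (indicator {c..d} t * norm (H t)) \<partial>lborel) < \<infinity>"
    using Hfin by (simp add: ennreal_mult_less_top)
  finally have Gint: "integrable (lborel \<Otimes>\<^sub>M lborel) G" by (intro integrableI_bounded Gm)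
  have "(\<integral>x. indicator {c..d} x *\<^sub>R ((\<integral>t. indicator {c..x} t *\<^sub>R H t \<partial>lborel) * cp (\<psi>' x)) \<partial>lborel)
      = (\<integral>x. (\<integral>t. G (x, t) \<partial>lborel) \<partial>lborel)"
  proof (intro Bochner_Integration.integral_cong refl)
    fix x
    show "indicator {c..d} x *\<^sub>R ((\<integral>t. indicator {c..x} t *\<^sub>R H t \<partial>lborel) * cp (\<psi>' x)) = (\<integral>t. G (x, t) \<partial>lborel)"
      unfolding G_def case_prod_conv by (simp only: integral_scaleR_right integral_mult_left_zero)
  qed
  also have "\<dots> = (\<integral>t. (\<integral>x. G (x, t) \<partial>lborel) \<partial>lborel)"
    using lborel_pair.Fubini_integral[of "\<lambda>x t. G (x, t)"] Gint by simp
  also have "\<dots> = (\<integral>t. - (indicator {c..d} t *\<^sub>R (H t * cp (\<psi> t))) \<partial>lborel)"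
  proof (intro Bochner_Integration.integral_cong refl)
    fix t
    show "(\<integral>x. G (x, t) \<partial>lborel) = - (indicator {c..d} t *\<^sub>R (H t * cp (\<psi> t)))"
    proof (cases "t \<in> {c..d}")
      case False
      then have "(\<lambda>x. G (x, t)) = (\<lambda>x. 0)" by (auto simp: G_def indicator_def fun_eq_iff)
      with False show ?thesis by simp
    next
      case True
      have "(\<integral>x. G (x, t) \<partial>lborel) = (\<integral>x. H t * cp (indicator {t..d} x *\<^sub>R \<psi>' x) \<partial>lborel)"
        using True by (intro Bochner_Integration.integral_cong refl) (auto simp: G_def indicator_def)
      also have "\<dots> = H t * cp (\<integral>x. indicator {t..d} x *\<^sub>R \<psi>' x \<partial>lborel)"
        by (subst integral_mult_right_zero) (simp only: integral_complex_of_real)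
      also have "(\<integral>x. indicator {t..d} x *\<^sub>R \<psi>' x \<partial>lborel) = \<psi> d - \<psi> t"
      proof (rule integral_FTC_atLeastAtMost)
        show "t \<le> d" using True by simp
        show "(\<psi> has_vector_derivative \<psi>' x) (at x within {t..d})" for x
          using der[of x] by (simp add: has_real_derivative_iff_has_vector_derivative has_vector_derivative_at_within)
        show "continuous_on {t..d} \<psi>'" by (rule continuous_on_subset[OF cont]) auto
      qed
      finally show ?thesis using True \<psi>d by simp
    qed
  qed
  also have "\<dots> = - (\<integral>x. indicator {c..d} x *\<^sub>R (H x * cp (\<psi> x)) \<partial>lborel)"
    by (rule integral_minus)
  finally show ?thesis .
qed

lemma tf_deriv:
  assumes "test_function c d \<phi>"
  shows "((deriv ^^ k) \<phi> has_real_derivative (deriv ^^ Suc k) \<phi> x) (at x)"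
  using assms by (simp add: test_function_def)

lemma tf_cont:
  assumes "test_function c d \<phi>"
  shows "continuous_on UNIV ((deriv ^^ k) \<phi>)"
  using tf_deriv[OF assms] by (intro continuous_at_imp_continuous_on) (auto intro: DERIV_isCont)

lemma tf_zero:
  assumes tf: "test_function c d \<phi>"
  shows "\<exists>a b. c < a \<and> a \<le> b \<and> b < d \<and> (\<forall>k x. x \<notin> {a..b} \<longrightarrow> (deriv ^^ k) \<phi> x = 0)"
proof -
  obtain a b where ab: "c < a" "a \<le> b" "b < d" "\<And>x. x \<notin> {a..b} \<Longrightarrow> \<phi> x = 0"
    using tf unfolding test_function_def by blast
  have "(deriv ^^ k) \<phi> x = 0" if "x \<notin> {a..b}" for k x
    using that
  proof (induction k arbitrary: x)
    case 0 thus ?case using ab by simp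
  next
    case (Suc k)
    define S where "S = (if x < a then {..<a} else {b<..})"
    have S: "open S" "x \<in> S" "\<And>y. y \<in> S \<Longrightarrow> y \<notin> {a..b}"
      using Suc.prems ab by (auto simp: S_def split: if_splits)
    have "((deriv ^^ k) \<phi> has_field_derivative 0) (at x)"
    proof (rule has_field_derivative_transform_within_open[OF _ S(1,2)])
      show "((\<lambda>_. 0) has_field_derivative 0) (at x)" by simp
      show "\<And>y. y \<in> S \<Longrightarrow> 0 = (deriv ^^ k) \<phi> y" using Suc.IH S(3) by simp
    qed
    with tf_deriv[OF tf, of k x] show ?case by (metis DERIV_unique)
  qed
  with ab show ?thesis by blast
qed


lemma prab_iter_eq:
  "prab_iter \<alpha> \<beta> \<omega> \<rho> c d \<nu> g \<phi> = (-1) ^ (prab_order \<nu> \<beta>) *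
     (\<integral>x. indicator {c..d} x *\<^sub>R (Eop \<alpha> \<omega> c (of_nat (prab_order \<nu> \<beta>) + \<nu> * \<beta>) (\<nu> * \<rho>) g x *
        cp ((deriv ^^ prab_order \<nu> \<beta>) \<phi> x)) \<partial>lborel)"
  unfolding prab_iter_def Let_def set_lebesgue_integral_def prab_int_Eop ..

lemma prab_order_pos0:
  fixes z :: complex
  assumes "k \<ge> nat (\<lfloor>Re (- z)\<rfloor> + 1)"
  shows "Re (of_nat k + z) > 0"
proof -
  have "real k \<ge> of_int (\<lfloor>Re (- z)\<rfloor> + 1)" using assms by linarith
  moreover have "of_int (\<lfloor>Re (- z)\<rfloor> + 1) > Re (- z)" by linarith
  moreover have "Re (- z) = - Re z" "Re (of_nat k + z) = real k + Re z" by simp_all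
  ultimately show ?thesis by linarith
qed

lemma prab_order_pos:
  assumes "k \<ge> prab_order \<nu> \<beta>"
  shows "Re (of_nat k + \<nu> * \<beta>) > 0"
  using assms unfolding prab_order_def by (rule prab_order_pos0)

lemma prab_order_mono:
  assumes "Re (\<nu> * \<beta>) > 0"
  shows "prab_order (\<mu> + \<nu>) \<beta> \<le> prab_order \<mu> \<beta>"
proof -
  have "Re (- ((\<mu> + \<nu>) * \<beta>)) \<le> Re (- (\<mu> * \<beta>))" using assms by (simp add: distrib_right)
  hence "\<lfloor>Re (- ((\<mu> + \<nu>) * \<beta>))\<rfloor> \<le> \<lfloor>Re (- (\<mu> * \<beta>))\<rfloor>" by (rule floor_mono)
  thus ?thesis unfolding prab_order_def by simp
qed

theorem theorem5p3:
  fixes \<alpha> \<beta> \<omega> \<rho> \<mu> \<nu> :: complex and c d :: real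
    and f :: "real \<Rightarrow> complex" and \<phi> :: "real \<Rightarrow> real"
  assumes "Re \<alpha> > 0" and "Re \<beta> > 0"
    and "set_integrable lborel {c..d} f"
    and "Re (\<nu> * \<beta>) > 0"
    and "test_function c d \<phi>"
  shows "prab_iter \<alpha> \<beta> \<omega> \<rho> c d \<mu> (prab_int \<alpha> (\<nu> * \<beta>) \<omega> (\<nu> * \<rho>) c f) \<phi>
       = prab_iter \<alpha> \<beta> \<omega> \<rho> c d (\<mu> + \<nu>) f \<phi>"
proof (cases "c \<le> d")
  case False
  then have "{c..d} = {}" by simp
  thus ?thesis by (simp add: prab_iter_def set_lebesgue_integral_def)
next
  case cd: True
  note \<alpha> = assms(1) and \<beta> = assms(2) and fint = assms(3) and \<nu>\<beta> = assms(4) and tf = assms(5)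
  define f' where "f' = (\<lambda>u. indicator {c..d} u *\<^sub>R f u)"
  have "integrable lborel f'" using fint by (simp add: set_integrable_def f'_def)
  hence f'm[measurable]: "f' \<in> borel_measurable borel" by (simp add: borel_measurable_integrable)
  have f'fin: "(\<integral>\<^sup>+u. ennreal (indicator {c..d} u * norm (f' u)) \<partial>lborel) < \<infinity>"
  proof -
    have "(\<integral>\<^sup>+u. ennreal (indicator {c..d} u * norm (f' u)) \<partial>lborel) = (\<integral>\<^sup>+u. ennreal (indicator {c..d} u * norm (f u)) \<partial>lborel)"
      by (intro nn_integral_cong) (simp add: f'_def indicator_def)
    thus ?thesis using set_integrable_nn_fin[OF fint] by simp
  qed
  have ff': "Eop \<alpha> \<omega> c \<gamma> \<rho>' f x = Eop \<alpha> \<omega> c \<gamma> \<rho>' f' x" if "x \<le> d" for \<gamma> \<rho>' x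
    by (rule Eop_cong) (use that in \<open>auto simp: f'_def\<close>)
  define m where "m = prab_order \<mu> \<beta>"
  define m' where "m' = prab_order (\<mu> + \<nu>) \<beta>"
  define \<gamma>0 where "\<gamma>0 = (\<mu> + \<nu>) * \<beta>"
  define \<rho>0 where "\<rho>0 = (\<mu> + \<nu>) * \<rho>"
  define G where "G k = Eop \<alpha> \<omega> c (of_nat k + \<gamma>0) \<rho>0 f'" for k
  define \<psi> where "\<psi> k = (deriv ^^ k) \<phi>" for k
  define I where "I k = (\<integral>x. indicator {c..d} x *\<^sub>R (G k x * cp (\<psi> k x)) \<partial>lborel)" for k
  have mm': "m' \<le> m" unfolding m_def m'_def by (rule prab_order_mono[OF \<nu>\<beta>])
  have Rek: "Re (of_nat k + \<gamma>0) > 0" if "k \<ge> m'" for k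
    unfolding \<gamma>0_def by (rule prab_order_pos) (use that in \<open>simp add: m'_def\<close>)
  have \<psi>m[measurable]: "\<psi> k \<in> borel_measurable borel" for k
    unfolding \<psi>_def by (rule borel_measurable_continuous_onI[OF tf_cont[OF tf]])
  have Gm[measurable]: "G k \<in> borel_measurable borel" if "k \<ge> m'" for k
    unfolding G_def by (rule Eop_measurable[OF \<alpha> Rek[OF that] f'm])
  obtain a b where ab: "c < a" "a \<le> b" "b < d" "\<And>k x. x \<notin> {a..b} \<Longrightarrow> (deriv ^^ k) \<phi> x = 0"
    using tf_zero[OF tf] by blast
  have \<psi>d: "\<psi> k d = 0" for k unfolding \<psi>_def using ab by auto

    have RHS: "prab_iter \<alpha> \<beta> \<omega> \<rho> c d (\<mu> + \<nu>) f \<phi> = (-1) ^ m' * I m'"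
    unfolding prab_iter_eq I_def m'_def[symmetric]
  proof (intro arg_cong[where f="\<lambda>z. (-1) ^ m' * z"] Bochner_Integration.integral_cong refl)
    fix x
    show "indicator {c..d} x *\<^sub>R (Eop \<alpha> \<omega> c (of_nat m' + (\<mu> + \<nu>) * \<beta>) ((\<mu> + \<nu>) * \<rho>) f x * cp ((deriv ^^ m') \<phi> x))
        = indicator {c..d} x *\<^sub>R (G m' x * cp (\<psi> m' x))"
      by (cases "x \<in> {c..d}") (auto simp: G_def \<psi>_def \<gamma>0_def \<rho>0_def ff')
  qed

    have Rem: "Re (of_nat m + \<mu> * \<beta>) > 0" by (rule prab_order_pos) (simp add: m_def)
  have LHS: "prab_iter \<alpha> \<beta> \<omega> \<rho> c d \<mu> (prab_int \<alpha> (\<nu> * \<beta>) \<omega> (\<nu> * \<rho>) c f) \<phi> = (-1) ^ m * I m"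
  proof -
    have "prab_iter \<alpha> \<beta> \<omega> \<rho> c d \<mu> (prab_int \<alpha> (\<nu> * \<beta>) \<omega> (\<nu> * \<rho>) c f) \<phi>
      = (-1) ^ m * (\<integral>x. indicator {c..d} x *\<^sub>R (Eop \<alpha> \<omega> c (of_nat m + \<mu> * \<beta>) (\<mu> * \<rho>)
            (Eop \<alpha> \<omega> c (\<nu> * \<beta>) (\<nu> * \<rho>) f') x * cp (\<psi> m x)) \<partial>lborel)"
      unfolding prab_iter_eq m_def[symmetric]
    proof (intro arg_cong[where f="\<lambda>z. (-1) ^ m * z"] Bochner_Integration.integral_cong refl)
      fix x
      show "indicator {c..d} x *\<^sub>R (Eop \<alpha> \<omega> c (of_nat m + \<mu> * \<beta>) (\<mu> * \<rho>) (prab_int \<alpha> (\<nu> * \<beta>) \<omega> (\<nu> * \<rho>) c f) x * cp ((deriv ^^ m) \<phi> x))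
         = indicator {c..d} x *\<^sub>R (Eop \<alpha> \<omega> c (of_nat m + \<mu> * \<beta>) (\<mu> * \<rho>) (Eop \<alpha> \<omega> c (\<nu> * \<beta>) (\<nu> * \<rho>) f') x * cp (\<psi> m x))"
      proof (cases "x \<in> {c..d}")
        case True
        have "Eop \<alpha> \<omega> c (of_nat m + \<mu> * \<beta>) (\<mu> * \<rho>) (prab_int \<alpha> (\<nu> * \<beta>) \<omega> (\<nu> * \<rho>) c f) x
            = Eop \<alpha> \<omega> c (of_nat m + \<mu> * \<beta>) (\<mu> * \<rho>) (Eop \<alpha> \<omega> c (\<nu> * \<beta>) (\<nu> * \<rho>) f') x"
          by (rule Eop_cong) (use True in \<open>auto simp: prab_int_Eop ff'\<close>)
        thus ?thesis by (simp add: \<psi>_def)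
      qed simp
    qed
    also have "(\<integral>x. indicator {c..d} x *\<^sub>R (Eop \<alpha> \<omega> c (of_nat m + \<mu> * \<beta>) (\<mu> * \<rho>)
            (Eop \<alpha> \<omega> c (\<nu> * \<beta>) (\<nu> * \<rho>) f') x * cp (\<psi> m x)) \<partial>lborel) = I m"
      unfolding I_def
    proof (rule integral_cong_AE)
      have [measurable]: "Eop \<alpha> \<omega> c (\<nu> * \<beta>) (\<nu> * \<rho>) f' \<in> borel_measurable borel"
        by (rule Eop_measurable[OF \<alpha> \<nu>\<beta> f'm])
      have [measurable]: "Eop \<alpha> \<omega> c (of_nat m + \<mu> * \<beta>) (\<mu> * \<rho>) (Eop \<alpha> \<omega> c (\<nu> * \<beta>) (\<nu> * \<rho>) f') \<in> borel_measurable borel"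
        by (rule Eop_measurable[OF \<alpha> Rem]) measurable
      have [measurable]: "G m \<in> borel_measurable borel" using Gm mm' by simp
      show "(\<lambda>x. indicator {c..d} x *\<^sub>R (Eop \<alpha> \<omega> c (of_nat m + \<mu> * \<beta>) (\<mu> * \<rho>) (Eop \<alpha> \<omega> c (\<nu> * \<beta>) (\<nu> * \<rho>) f') x * cp (\<psi> m x))) \<in> borel_measurable lborel"
        by measurable
      show "(\<lambda>x. indicator {c..d} x *\<^sub>R (G m x * cp (\<psi> m x))) \<in> borel_measurable lborel"
        by measurable
      have "AE x in lborel. x \<in> {c..d} \<longrightarrow> Eop \<alpha> \<omega> c (of_nat m + \<mu> * \<beta>) (\<mu> * \<rho>) (Eop \<alpha> \<omega> c (\<nu> * \<beta>) (\<nu> * \<rho>) f') x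
           = Eop \<alpha> \<omega> c ((of_nat m + \<mu> * \<beta>) + \<nu> * \<beta>) (\<mu> * \<rho> + \<nu> * \<rho>) f' x"
        by (rule Eop_semigroup_AE[OF \<alpha> Rem \<nu>\<beta> cd f'm f'fin])
      moreover have e1: "(of_nat m + \<mu> * \<beta>) + \<nu> * \<beta> = of_nat m + \<gamma>0" and e2: "\<mu> * \<rho> + \<nu> * \<rho> = \<rho>0"
        by (simp_all add: \<gamma>0_def \<rho>0_def algebra_simps)
      ultimately show "AE x in lborel. indicator {c..d} x *\<^sub>R (Eop \<alpha> \<omega> c (of_nat m + \<mu> * \<beta>) (\<mu> * \<rho>) (Eop \<alpha> \<omega> c (\<nu> * \<beta>) (\<nu> * \<rho>) f') x * cp (\<psi> m x))
          = indicator {c..d} x *\<^sub>R (G m x * cp (\<psi> m x))"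
        by (elim eventually_mono) (auto simp: G_def indicator_def e1 e2)
    qed
    finally show ?thesis .
  qed

    have stepI: "I (Suc k) = - I k" if k: "k \<ge> m'" for k
  proof -
    have [measurable]: "G k \<in> borel_measurable borel" by (rule Gm[OF k])
    have [measurable]: "G (Suc k) \<in> borel_measurable borel" using Gm k by simp
    have [measurable]: "Eop \<alpha> \<omega> c 1 0 (G k) \<in> borel_measurable borel"
      by (rule Eop_measurable[OF \<alpha>]) simp_all
    have "I (Suc k) = (\<integral>x. indicator {c..d} x *\<^sub>R (Eop \<alpha> \<omega> c 1 0 (G k) x * cp (\<psi> (Suc k) x)) \<partial>lborel)"
      unfolding I_def
    proof (rule integral_cong_AE)
      show "(\<lambda>x. indicator {c..d} x *\<^sub>R (G (Suc k) x * cp (\<psi> (Suc k) x))) \<in> borel_measurable lborel"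
        by measurable
      show "(\<lambda>x. indicator {c..d} x *\<^sub>R (Eop \<alpha> \<omega> c 1 0 (G k) x * cp (\<psi> (Suc k) x))) \<in> borel_measurable lborel"
        by measurable
      have "AE x in lborel. x \<in> {c..d} \<longrightarrow> Eop \<alpha> \<omega> c 1 0 (Eop \<alpha> \<omega> c (of_nat k + \<gamma>0) \<rho>0 f') x
           = Eop \<alpha> \<omega> c (1 + (of_nat k + \<gamma>0)) (0 + \<rho>0) f' x"
        by (rule Eop_semigroup_AE[OF \<alpha> _ Rek[OF k] cd f'm f'fin]) simp
      moreover have e1: "1 + (of_nat k + \<gamma>0) = of_nat (Suc k) + \<gamma>0" by simp
      ultimately show "AE x in lborel. indicator {c..d} x *\<^sub>R (G (Suc k) x * cp (\<psi> (Suc k) x))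
          = indicator {c..d} x *\<^sub>R (Eop \<alpha> \<omega> c 1 0 (G k) x * cp (\<psi> (Suc k) x))"
        by (elim eventually_mono) (auto simp: G_def indicator_def e1)
    qed
    also have "\<dots> = (\<integral>x. indicator {c..d} x *\<^sub>R ((\<integral>t. indicator {c..x} t *\<^sub>R G k t \<partial>lborel) * cp (\<psi> (Suc k) x)) \<partial>lborel)"
      by (simp add: Eop_one)
    also have "\<dots> = - I k"
      unfolding I_def
    proof (rule ibp)
      show "(\<integral>\<^sup>+u. ennreal (indicator {c..d} u * norm (G k u)) \<partial>lborel) < \<infinity>"
        unfolding G_def by (rule Eop_nn_fin[OF \<alpha> Rek[OF k] cd f'm f'fin])
      show "(\<psi> k has_real_derivative \<psi> (Suc k) x) (at x)" for x
        unfolding \<psi>_def by (rule tf_deriv[OF tf])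
      show "continuous_on UNIV (\<psi> (Suc k))" unfolding \<psi>_def by (rule tf_cont[OF tf])
    qed (use cd \<psi>d in simp_all)
    finally show ?thesis .
  qed
  have chain: "(-1) ^ k * I k = (-1) ^ m' * I m'" if "k \<ge> m'" for k
    using that
  proof (induction k rule: dec_induct)
    case base thus ?case by simp
  next
    case (step k)
    have "(-1) ^ Suc k * I (Suc k) = (-1) ^ k * I k" using stepI[OF step(1)] by simp
    thus ?case using step.IH by (rule trans)
  qed
  show ?thesis unfolding LHS RHS using chain[OF mm'] .
qed

end
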